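(* Let $K$ be a finite simplicial complex, $f$ an injective filtration function on $K$, and $n$ a positive integer. Assume $[a,b)$ (with $b$ finite) is a bar of the persistence module $\{H_n(K^f_r)\}_{r\in\mathbb{R}}$ represented by a class $[\alpha]\in H_n(K^f_a)$ born at $a$ and terminated at $b$, where $\alpha$ is an $n$-cycle. Choose $\varepsilon<(b-a)/4$ and assume that every other bar $[a_i,b_i)$ of $\{H_n(K^f_r)\}_{r\in\mathbb{R}}$ satisfies $a_i>a+2\varepsilon$ or $b_i<b-2\varepsilon$. Let $g$ be an injective filtration function with $\|f-g\|_\infty\le\varepsilon$, and assume that a matching of barcodes as in the stability theorem (see context) matches the bar $[a,b)$ to a bar $[a',b')$ of $\{H_n(K^g_r)\}_{r\in\mathbb{R}}$. Then: (1) the class of $\alpha$ in $\{H_n(K^g_r)\}_{r\in\mathbb{R}}$ terminates at $b'$; (2) if $\varepsilon\le\frac12\min\{R_u,R_l\}$, where $R_u=\min\{|f(\tau)-b|: \tau\text{ a birth }(n+1)\text{-simplex with } f(\tau)>b\}$ (or $\infty$ if none) and $R_l=\min\{|f(\tau)-b|: \tau\text{ a terminal }(n+1)\text{-simplex with } f(\tau)<b\}$ (or $\infty$ if none), then the simplex of $K$ terminating the bar $[a,b)$ in $K^f$ (the simplex with $f$-value $b$) is the same as the simplex terminating the bar $[a',b')$ in $K^g$ (the simplex with $g$-value $b'$).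
   Context: A filtration function on a finite simplicial complex $K$ is a map $f\colon K\to\mathbb{R}$ with $f(\sigma)\le f(\tau)$ whenever $\sigma$ is a face of $\tau$. Sublevel complexes are $K^f_r=f^{-1}((-\infty,r])$; homology is with coefficients in a fixed field $\mathbb{F}$, and $\{H_n(K^f_r)\}_r$ with inclusion-induced maps is a persistence module, decomposing as a finite direct sum of interval modules $\mathbb{F}_{[a_i,b_i)}$; the multiset of intervals is the barcode, its elements are bars. For a nontrivial class $[\alpha]\in H_n(K^f_r)$, its birth is the infimum of $q\le r$ such that $[\alpha]$ is in the image of $H_n(K^f_q)\to H_n(K^f_r)$ and its termination scale is the infimum of $q\ge r$ such that $[\alpha]$ maps to $0$ in $H_n(K^f_q)$. Since $f$ is injective, each simplex is either a birth simplex (adding it creates a new nontrivial homology class) or a terminal simplex (adding it makes a nontrivial homology class trivial). $\|f-g\|_\infty=\max_{\sigma\in K}|f(\sigma)-g(\sigma)|$. If $\|f-g\|_\infty\le\varepsilon$, with barcodes $\{[a_i,b_i)\}_{i\in I}$ of $f$ and $\{[a'_j,b'_j)\}_{j\in J}$ of $g$ in degree $n$, a matching as in the stability theorem is a bijection $\varphi\colon I'\to J'$ between subsets $I'\subseteq I$, $J'\subseteq J$ with $|a_i-a'_{\varphi(i)}|\le\varepsilon$ and $|b_i-b'_{\varphi(i)}|\le\varepsilon$ for $i\in I'$, $|a_i-b_i|\le2\varepsilon$ for $i\in I\setminus I'$ and $|a'_j-b'_j|\le2\varepsilon$ for $j\in J\setminus J'$ (such a matching exists by the stability theorem). *)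

theory Defs
  imports Main "HOL-Library.Extended_Real" "HOL-Library.Multiset" "HOL-Library.Function_Algebras"
begin

text \<open>Simplices are finite nonempty sets of vertices; vertices are linearly ordered,
  which fixes the orientation of every simplex. A simplex of dimension d has d+1 vertices.\<close>

definition simplicial_complex :: "('v::linorder) set set \<Rightarrow> bool" where
  "simplicial_complex K \<longleftrightarrow> finite K \<and>
     (\<forall>\<sigma>\<in>K. finite \<sigma> \<and> \<sigma> \<noteq> {} \<and> (\<forall>\<tau>. \<tau> \<subseteq> \<sigma> \<and> \<tau> \<noteq> {} \<longrightarrow> \<tau> \<in> K))"

definition filtration :: "('v::linorder) set set \<Rightarrow> ('v set \<Rightarrow> real) \<Rightarrow> bool" where
  "filtration K f \<longleftrightarrow> (\<forall>\<sigma>\<in>K. \<forall>\<tau>\<in>K. \<sigma> \<subseteq> \<tau> \<longrightarrow> f \<sigma> \<le> f \<tau>)"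

definition sublevel :: "'v set set \<Rightarrow> ('v set \<Rightarrow> real) \<Rightarrow> real \<Rightarrow> 'v set set" where
  "sublevel K f r = {\<sigma>\<in>K. f \<sigma> \<le> r}"

definition sup_norm_le :: "'v set set \<Rightarrow> ('v set \<Rightarrow> real) \<Rightarrow> ('v set \<Rightarrow> real) \<Rightarrow> real \<Rightarrow> bool" where
  "sup_norm_le K f g e \<longleftrightarrow> (\<forall>\<sigma>\<in>K. \<bar>f \<sigma> - g \<sigma>\<bar> \<le> e)"

definition chain :: "'v set set \<Rightarrow> nat \<Rightarrow> ('v set \<Rightarrow> 'k::field) \<Rightarrow> bool" where
  "chain L d c \<longleftrightarrow> (\<forall>\<sigma>. c \<sigma> \<noteq> 0 \<longrightarrow> \<sigma> \<in> L \<and> card \<sigma> = Suc d)"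

definition face_sign :: "('v::linorder) set \<Rightarrow> 'v set \<Rightarrow> 'k::field" where
  "face_sign \<sigma> \<tau> = (-1) ^ card {w\<in>\<sigma>. w < the_elem (\<sigma> - \<tau>)}"

text \<open>Simplicial boundary (non-augmented: the boundary of a vertex is 0).\<close>
definition bd :: "('v::linorder) set set \<Rightarrow> ('v set \<Rightarrow> 'k::field) \<Rightarrow> 'v set \<Rightarrow> 'k" where
  "bd K c = (\<lambda>\<tau>. if \<tau> = {} then 0 else
      (\<Sum>\<sigma>\<in>{\<sigma>\<in>K. \<tau> \<subseteq> \<sigma> \<and> card \<sigma> = Suc (card \<tau>)}. face_sign \<sigma> \<tau> * c \<sigma>))"

definition cycles :: "('v::linorder) set set \<Rightarrow> 'v set set \<Rightarrow> nat \<Rightarrow> ('v set \<Rightarrow> 'k::field) set" where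
  "cycles K L d = {c. chain L d c \<and> bd K c = 0}"

definition boundaries :: "('v::linorder) set set \<Rightarrow> 'v set set \<Rightarrow> nat \<Rightarrow> ('v set \<Rightarrow> 'k::field) set" where
  "boundaries K L d = {bd K e | e. chain L (Suc d) e}"

definition lincomb :: "(nat \<Rightarrow> 'k::field) \<Rightarrow> nat set \<Rightarrow> (nat \<Rightarrow> 'v set \<Rightarrow> 'k) \<Rightarrow> 'v set \<Rightarrow> 'k" where
  "lincomb c J z = (\<lambda>\<sigma>. \<Sum>i\<in>J. c i * z i \<sigma>)"

text \<open>An interval decomposition of the persistence module r \<mapsto> H_n(K^f_r):
  finitely many bars [a i, d i) with generators z i (n-cycles of K^f_{a i}) such that the
  classes of z i die at d i and, at every r, the classes of the generators of the bars
  containing r form a basis of H_n(K^f_r). This is exactly an isomorphism from the direct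
  sum of the interval modules F_[a i, d i) to the persistence module.\<close>

definition interval_decomp ::
  "('v::linorder) set set \<Rightarrow> ('v set \<Rightarrow> real) \<Rightarrow> nat \<Rightarrow> nat set \<Rightarrow> (nat \<Rightarrow> real) \<Rightarrow> (nat \<Rightarrow> ereal)
    \<Rightarrow> (nat \<Rightarrow> 'v set \<Rightarrow> 'k::field) \<Rightarrow> bool" where
  "interval_decomp K f n I a d z \<longleftrightarrow> finite I \<and>
     (\<forall>i\<in>I. ereal (a i) < d i \<and> z i \<in> cycles K (sublevel K f (a i)) n) \<and>
     (\<forall>r. \<forall>i\<in>I. d i \<le> ereal r \<longrightarrow> z i \<in> boundaries K (sublevel K f r) n) \<and>
     (\<forall>r. let J = {i\<in>I. a i \<le> r \<and> ereal r < d i} in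
        (\<forall>c. lincomb c J z \<in> boundaries K (sublevel K f r) n \<longrightarrow> (\<forall>i\<in>J. c i = 0)) \<and>
        (\<forall>y\<in>cycles K (sublevel K f r) n. \<exists>c. y - lincomb c J z \<in> boundaries K (sublevel K f r) n))"

definition barcode :: "'k::field itself \<Rightarrow> ('v::linorder) set set \<Rightarrow> ('v set \<Rightarrow> real) \<Rightarrow> nat
    \<Rightarrow> (real \<times> ereal) multiset" where
  "barcode TYPE('k) K f n = (SOME B. \<exists>I a d (z :: nat \<Rightarrow> 'v set \<Rightarrow> 'k).
      interval_decomp K f n I a d z \<and> B = image_mset (\<lambda>i. (a i, d i)) (mset_set I))"

definition birth_scale :: "('v::linorder) set set \<Rightarrow> ('v set \<Rightarrow> real) \<Rightarrow> nat \<Rightarrow> real \<Rightarrow> ('v set \<Rightarrow> 'k::field) \<Rightarrow> ereal" where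
  "birth_scale K f n r \<alpha> = Inf {ereal q | q. q \<le> r \<and>
      (\<exists>\<beta>\<in>cycles K (sublevel K f q) n. \<alpha> - \<beta> \<in> boundaries K (sublevel K f r) n)}"

text \<open>Termination scale of the class of the cycle \<alpha> in H_n(K^f_r) (\<infinity> if it never dies).\<close>
definition termination_scale :: "('v::linorder) set set \<Rightarrow> ('v set \<Rightarrow> real) \<Rightarrow> nat \<Rightarrow> real \<Rightarrow> ('v set \<Rightarrow> 'k::field) \<Rightarrow> ereal" where
  "termination_scale K f n r \<alpha> = Inf {ereal q | q. r \<le> q \<and> \<alpha> \<in> boundaries K (sublevel K f q) n}"

text \<open>A simplex \<sigma> of dimension
  d = card \<sigma> - 1 is a birth simplex if adding it creates a new nontrivial class in H_d, i.e.
  H_d(K^f_{<f \<sigma>}) \<rightarrow> H_d(K^f_{f \<sigma>}) is not surjective; it is terminal if adding it makes a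
  nontrivial class of H_{d-1}(K^f_{<f \<sigma>}) trivial.\<close>

definition strict_sublevel :: "'v set set \<Rightarrow> ('v set \<Rightarrow> real) \<Rightarrow> real \<Rightarrow> 'v set set" where
  "strict_sublevel K f r = {\<sigma>\<in>K. f \<sigma> < r}"

definition birth_simplex :: "'k::field itself \<Rightarrow> ('v::linorder) set set \<Rightarrow> ('v set \<Rightarrow> real) \<Rightarrow> 'v set \<Rightarrow> bool" where
  "birth_simplex TYPE('k) K f \<sigma> \<longleftrightarrow> \<sigma> \<in> K \<and>
     (\<exists>y \<in> (cycles K (sublevel K f (f \<sigma>)) (card \<sigma> - 1) :: ('v set \<Rightarrow> 'k) set).
        \<forall>w\<in>cycles K (strict_sublevel K f (f \<sigma>)) (card \<sigma> - 1).
          y - w \<notin> boundaries K (sublevel K f (f \<sigma>)) (card \<sigma> - 1))"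

definition terminal_simplex :: "'k::field itself \<Rightarrow> ('v::linorder) set set \<Rightarrow> ('v set \<Rightarrow> real) \<Rightarrow> 'v set \<Rightarrow> bool" where
  "terminal_simplex TYPE('k) K f \<sigma> \<longleftrightarrow> \<sigma> \<in> K \<and> 2 \<le> card \<sigma> \<and>
     (\<exists>y \<in> (cycles K (strict_sublevel K f (f \<sigma>)) (card \<sigma> - 2) :: ('v set \<Rightarrow> 'k) set).
        y \<notin> boundaries K (strict_sublevel K f (f \<sigma>)) (card \<sigma> - 2) \<and>
        y \<in> boundaries K (sublevel K f (f \<sigma>)) (card \<sigma> - 2))"

text \<open>Closeness of (possibly infinite) endpoints: two infinite endpoints are at distance 0.\<close>
definition ereal_close :: "real \<Rightarrow> ereal \<Rightarrow> ereal \<Rightarrow> bool" where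
  "ereal_close e x y \<longleftrightarrow> x = y \<or> (\<exists>u v. x = ereal u \<and> y = ereal v \<and> \<bar>u - v\<bar> \<le> e)"

definition stability_matching :: "real \<Rightarrow> (real \<times> ereal) multiset \<Rightarrow> (real \<times> ereal) multiset
    \<Rightarrow> ((real \<times> ereal) \<times> (real \<times> ereal)) multiset \<Rightarrow> bool" where
  "stability_matching e Bf Bg M \<longleftrightarrow>
     image_mset fst M \<subseteq># Bf \<and> image_mset snd M \<subseteq># Bg \<and>
     (\<forall>p\<in>#M. \<bar>fst (fst p) - fst (snd p)\<bar> \<le> e \<and> ereal_close e (snd (fst p)) (snd (snd p))) \<and>
     (\<forall>x\<in># Bf - image_mset fst M. ereal_close (2 * e) (ereal (fst x)) (snd x)) \<and>
     (\<forall>y\<in># Bg - image_mset snd M. ereal_close (2 * e) (ereal (fst y)) (snd y))"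

end

theory Submission
  imports Defs
begin

definition sc :: "'k::field \<Rightarrow> ('a \<Rightarrow> 'k) \<Rightarrow> 'a \<Rightarrow> 'k" where
  "sc c x = (\<lambda>s. c * x s)"

interpretation V: vector_space "sc :: 'k::field \<Rightarrow> ('a \<Rightarrow> 'k) \<Rightarrow> 'a \<Rightarrow> 'k"
  by unfold_locales (auto simp: sc_def fun_eq_iff algebra_simps)

lemma sc_apply[simp]: "sc c x s = c * x s" by (simp add: sc_def)

lemma sum_fun_apply: "(\<Sum>i\<in>A. F i) x = (\<Sum>i\<in>A. F i x)"
  by (induction A rule: infinite_finite_induct) auto

lemma lincomb_sum: "lincomb c J z = (\<Sum>i\<in>J. sc (c i) (z i))"
  by (simp add: lincomb_def fun_eq_iff sum_fun_apply)

lemma chain_mono: "L \<subseteq> L' \<Longrightarrow> chain L d c \<Longrightarrow> chain L' d c"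
  by (auto simp: chain_def)

lemma chain_add: "chain L d x \<Longrightarrow> chain L d y \<Longrightarrow> chain L d (x + y)"
  unfolding chain_def by (metis add.left_neutral add.right_neutral plus_fun_apply)

lemma chain_sc: "chain L d x \<Longrightarrow> chain L d (sc c x)"
  unfolding chain_def by auto

lemma chain_zero[simp]: "chain L d 0"
  unfolding chain_def by auto

lemma chain_subspace: "V.subspace {c :: _ \<Rightarrow> 'k::field. chain L d c}"
  unfolding V.subspace_def using chain_add chain_sc by auto

lemma bd_add: "bd K (x + y) = bd K x + bd K y"
  by (simp add: bd_def fun_eq_iff sum.distrib distrib_left)

lemma bd_sc: "bd K (sc c x) = sc c (bd K x)"
  by (simp add: bd_def fun_eq_iff sum_distrib_left algebra_simps)

lemma bd_zero[simp]: "bd K 0 = 0"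
  by (simp add: bd_def fun_eq_iff)

lemma bd_diff: "bd K (x - y) = bd K x - bd K y"
  by (simp add: bd_def fun_eq_iff sum_subtractf right_diff_distrib)

lemma bd_sum: "bd K (\<Sum>i\<in>A. F i) = (\<Sum>i\<in>A. bd K (F i))"
proof (induction A rule: infinite_finite_induct)
  case (infinite A) then show ?case by (metis sum.infinite bd_zero)
next
  case empty then show ?case by (simp only: sum.empty bd_zero)
next
  case (insert x B) then show ?case by (metis sum.insert bd_add)
qed

lemma cycles_subspace: "V.subspace (cycles K L d :: (_ \<Rightarrow> 'k::field) set)"
  unfolding V.subspace_def cycles_def using chain_add chain_sc by (auto simp: bd_add bd_sc)

lemma boundaries_subspace: "V.subspace (boundaries K L d :: (_ \<Rightarrow> 'k::field) set)"
  unfolding V.subspace_def boundaries_def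
proof (intro conjI ballI allI)
  show "(0 :: _ \<Rightarrow> 'k) \<in> {bd K e |e. chain L (Suc d) e}"
    by (rule CollectI, rule exI[of _ 0]) simp
next
  fix x y :: "_ \<Rightarrow> 'k" assume "x \<in> {bd K e |e. chain L (Suc d) e}" "y \<in> {bd K e |e. chain L (Suc d) e}"
  then obtain e1 e2 where "x = bd K e1" "chain L (Suc d) e1" "y = bd K e2" "chain L (Suc d) e2" by auto
  then show "x + y \<in> {bd K e |e. chain L (Suc d) e}"
    by (intro CollectI exI[of _ "e1 + e2"]) (auto simp: bd_add chain_add)
next
  fix c :: 'k and x :: "_ \<Rightarrow> 'k" assume "x \<in> {bd K e |e. chain L (Suc d) e}"
  then obtain e1 where "x = bd K e1" "chain L (Suc d) e1" by auto
  then show "sc c x \<in> {bd K e |e. chain L (Suc d) e}"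
    by (intro CollectI exI[of _ "sc c e1"]) (auto simp: bd_sc chain_sc)
qed

lemma cycles_mono: "L \<subseteq> L' \<Longrightarrow> cycles K L d \<subseteq> cycles K L' d"
  by (auto simp: cycles_def chain_def)

lemma boundaries_mono: "L \<subseteq> L' \<Longrightarrow> boundaries K L d \<subseteq> boundaries K L' d"
  by (auto simp: boundaries_def chain_def)

lemma sublevel_mono: "r \<le> s \<Longrightarrow> sublevel K f r \<subseteq> sublevel K f s"
  by (auto simp: sublevel_def)

definition ind :: "'a \<Rightarrow> 'a \<Rightarrow> 'k::field" where "ind s = (\<lambda>t. if t = s then 1 else 0)"

lemma chain_span: assumes "finite K" "L \<subseteq> K" "chain L d c"
  shows "c \<in> V.span (ind ` K)"
proof -
  have "c = (\<Sum>s\<in>K. sc (c s) (ind s))"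
  proof
    fix t show "c t = (\<Sum>s\<in>K. sc (c s) (ind s)) t"
      using assms by (auto simp: sum_fun_apply ind_def chain_def if_distrib cong: if_cong)
  qed
  also have "\<dots> \<in> V.span (ind ` K)"
    by (intro V.span_sum V.span_scale V.span_base) auto
  finally show ?thesis .
qed

context vector_space begin

lemma pivot:
  fixes B :: "real \<Rightarrow> 'b set"
  assumes Bsub: "\<And>s. subspace (B s)" and Bmono: "\<And>s t. s \<le> t \<Longrightarrow> B s \<subseteq> B t"
    and Bleast: "\<And>X. 0 \<notin> X \<Longrightarrow> (\<exists>s. X \<inter> B s \<noteq> {}) \<Longrightarrow>
                  \<exists>s0. X \<inter> B s0 \<noteq> {} \<and> (\<forall>s. X \<inter> B s \<noteq> {} \<longrightarrow> s0 \<le> s)"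
  shows "independent (set us) \<Longrightarrow> distinct us \<Longrightarrow>
    \<exists>ws (\<delta> :: nat \<Rightarrow> ereal). length ws = length us \<and> distinct ws \<and> independent (set ws) \<and>
      (\<forall>p \<le> length us. span (set (take p ws)) = span (set (take p us))) \<and>
      (\<forall>p<length us. \<forall>s. \<delta> p \<le> ereal s \<longrightarrow> ws!p \<in> B s) \<and>
      (\<forall>s. B s \<inter> span (set us) \<subseteq> span ((!) ws ` {p. p < length us \<and> \<delta> p \<le> ereal s}))"
proof (induction us rule: rev_induct)
  case Nil
  show ?case
    by (rule exI[of _ "[]"], rule exI[of _ "\<lambda>_. 0"]) (auto simp: span_zero independent_empty)
next
  case (snoc u us)
  have indus: "independent (set us)" using snoc.prems(1) independent_mono[of "set (us @ [u])" "set us"] by auto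
  have dus: "distinct us" "u \<notin> set us" using snoc.prems(2) by auto
  have uU: "u \<notin> span (set us)" using snoc.prems(1) dus(2) by (simp add: independent_insert)
  obtain ws \<delta> where len: "length ws = length us" and dws: "distinct ws" and iws: "independent (set ws)"
    and tk: "\<forall>p \<le> length us. span (set (take p ws)) = span (set (take p us))"
    and dB: "\<forall>p<length us. \<forall>s. \<delta> p \<le> ereal s \<longrightarrow> ws!p \<in> B s"
    and Bsp: "\<forall>s. B s \<inter> span (set us) \<subseteq> span ((!) ws ` {p. p < length us \<and> \<delta> p \<le> ereal s})"
    using snoc.IH[OF indus dus(1)] by blast
  define n where "n = length us"
  have spws: "span (set ws) = span (set us)" using tk len by (auto simp: n_def)
  define X where "X = span (insert u (set us)) - span (set us)"
  have X0: "0 \<notin> X" by (auto simp: X_def span_zero)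
  have uX: "u \<in> X" using uU by (auto simp: X_def intro: span_base)
  obtain w and e :: ereal where wX: "w \<in> X" and we: "\<forall>s. e \<le> ereal s \<longrightarrow> w \<in> B s"
    and emin: "\<forall>s. X \<inter> B s \<noteq> {} \<longrightarrow> e \<le> ereal s"
  proof (cases "\<exists>s. X \<inter> B s \<noteq> {}")
    case True
    from Bleast[OF X0 True] obtain s0 where s0: "X \<inter> B s0 \<noteq> {}" "\<forall>s. X \<inter> B s \<noteq> {} \<longrightarrow> s0 \<le> s"
      by blast
    then obtain w where "w \<in> X" "w \<in> B s0" by blast
    then show ?thesis using s0 Bmono by (intro that[of w "ereal s0"]) auto
  next
    case False
    then show ?thesis using uX by (intro that[of u "\<infinity>"]) auto
  qed
  have wU: "w \<notin> span (set ws)" using wX spws by (auto simp: X_def)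
  have wU': "w \<in> span (insert u (set us))" using wX by (auto simp: X_def)
  have sp_eq: "span (insert w (set ws)) = span (insert u (set us))"
  proof
    show "span (insert w (set ws)) \<subseteq> span (insert u (set us))"
      apply (rule span_minimal)
      using wU' spws span_superset[of "set ws"] span_mono[of "set us" "insert u (set us)"]
       apply blast
      by (simp add: subspace_span)
  next
    have "u \<in> span (insert w (set us))"
      by (rule in_span_insert[OF wU']) (use wU spws in simp)
    moreover have "span (insert w (set us)) \<subseteq> span (insert w (set ws))"
      apply (rule span_minimal)
      using spws span_superset[of "set us"] span_mono[of "set ws" "insert w (set ws)"]
       apply (auto intro: span_base)[1]
      by (simp add: subspace_span)
    ultimately have "insert u (set us) \<subseteq> span (insert w (set ws))"
      using spws span_superset[of "set us"] span_mono[of "set ws" "insert w (set ws)"] by blast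
    then show "span (insert u (set us)) \<subseteq> span (insert w (set ws))"
      by (rule span_minimal) (simp add: subspace_span)
  qed
  define ws' where "ws' = ws @ [w]"
  define \<delta>' where "\<delta>' = \<delta>(n := e)"
  show ?case
  proof (rule exI[of _ ws'], rule exI[of _ \<delta>'], intro conjI allI impI)
    show "length ws' = length (us @ [u])" using len by (simp add: ws'_def)
    show "distinct ws'" using dws wU by (auto simp: ws'_def intro: span_base)
    show "independent (set ws')" using iws wU by (simp add: ws'_def independent_insertI)
  next
    fix p assume p: "p \<le> length (us @ [u])"
    show "span (set (take p ws')) = span (set (take p (us @ [u])))"
    proof (cases "p \<le> n")
      case True
      then show ?thesis using tk len by (simp add: ws'_def n_def)
    next
      case False
      then have "p = Suc n" using p by (simp add: n_def)
      then show ?thesis using sp_eq len by (simp add: ws'_def n_def)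
    qed
  next
    fix p s assume p: "p < length (us @ [u])" and ds: "\<delta>' p \<le> ereal s"
    show "ws' ! p \<in> B s"
    proof (cases "p < n")
      case True
      then show ?thesis using dB ds len by (simp add: ws'_def \<delta>'_def n_def nth_append)
    next
      case False
      then have "p = n" using p by (simp add: n_def)
      then show ?thesis using we ds len by (simp add: ws'_def \<delta>'_def n_def nth_append)
    qed
  next
    fix s
    define T where "T = span ((!) ws' ` {p. p < length (us @ [u]) \<and> \<delta>' p \<le> ereal s})"
    have T1: "span ((!) ws ` {p. p < length us \<and> \<delta> p \<le> ereal s}) \<subseteq> T"
      unfolding T_def
      apply (rule span_mono)
      using len by (force simp: ws'_def \<delta>'_def n_def nth_append)
    show "B s \<inter> span (set (us @ [u])) \<subseteq> T"
    proof
      fix v assume v: "v \<in> B s \<inter> span (set (us @ [u]))"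
      show "v \<in> T"
      proof (cases "v \<in> span (set us)")
        case True
        then show ?thesis using v Bsp T1 by blast
      next
        case False
        then have "X \<inter> B s \<noteq> {}" using v by (auto simp: X_def)
        then have es: "e \<le> ereal s" using emin by blast
        then have wB: "w \<in> B s" using we by blast
        have wT: "w \<in> T" unfolding T_def
          apply (rule span_base)
          using es len by (auto simp: ws'_def \<delta>'_def n_def nth_append intro!: image_eqI[of _ _ n])
        have "v \<in> span (insert w (set ws))" using v sp_eq by simp
        then obtain k where k: "v - k *s w \<in> span (set ws)" by (auto simp: span_insert)
        have "v - k *s w \<in> B s" using v wB Bsub by (auto intro: subspace_diff subspace_scale)
        then have "v - k *s w \<in> T" using k spws Bsp T1 by blast
        then have "(v - k *s w) + k *s w \<in> T" using wT unfolding T_def by (intro span_add span_scale)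
        then show ?thesis by simp
      qed
    qed
  qed
qed

end

context vector_space begin

lemma refine_list:
  fixes Z :: "real \<Rightarrow> 'b set" and F :: "'b set"
  assumes Zsub: "\<And>r. subspace (Z r)" and Zmono: "\<And>r s. r \<le> s \<Longrightarrow> Z r \<subseteq> Z s"
   and finF: "finite F" and Zspan: "\<And>r. Z r \<subseteq> span F"
  shows "sorted ts \<Longrightarrow> distinct ts \<Longrightarrow> \<exists>us a. distinct us \<and> independent (set us) \<and>
     (\<forall>p q. p \<le> q \<longrightarrow> q < length us \<longrightarrow> a p \<le> a q) \<and> (\<forall>p<length us. a p \<in> set ts) \<and>
     (\<forall>t\<in>set ts. Z t = span ((!) us ` {p. p < length us \<and> a p \<le> t}))"
proof (induction ts rule: rev_induct)
  case Nil
  show ?case by (rule exI[of _ "[]"]) (auto simp: independent_empty)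
next
  case (snoc t ts)
  have lt: "\<forall>x\<in>set ts. x < t" using snoc.prems by (auto simp: sorted_append) (metis dual_order.order_iff_strict)
  obtain us a where dus: "distinct us" and ius: "independent (set us)"
    and sa: "\<forall>p q. p \<le> q \<longrightarrow> q < length us \<longrightarrow> a p \<le> a q" and ats: "\<forall>p<length us. a p \<in> set ts"
    and Zt: "\<forall>t\<in>set ts. Z t = span ((!) us ` {p. p < length us \<and> a p \<le> t})"
    using snoc.IH snoc.prems by (auto simp: sorted_append)
  have Sin: "set us \<subseteq> Z t"
  proof
    fix x assume "x \<in> set us"
    then obtain p where p: "p < length us" "x = us ! p" by (auto simp: in_set_conv_nth)
    have "x \<in> span ((!) us ` {q. q < length us \<and> a q \<le> a p})"
      using p by (auto intro!: span_base)
    also have "\<dots> = Z (a p)" using Zt ats p by auto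
    also have "\<dots> \<subseteq> Z t" using Zmono ats p lt by (meson less_imp_le)
    finally show "x \<in> Z t" .
  qed
  obtain Bs where Bs: "set us \<subseteq> Bs" "Bs \<subseteq> Z t" "independent Bs" "Z t \<subseteq> span Bs"
    using maximal_independent_subset_extend[OF Sin ius] by blast
  have finB: "finite Bs" using independent_span_bound[OF finF Bs(3)] Bs(2) Zspan by blast
  obtain vs where vs: "set vs = Bs - set us" "distinct vs"
    using finite_distinct_list[of "Bs - set us"] finB by blast
  define us' where "us' = us @ vs"
  define a' where "a' = (\<lambda>p. if p < length us then a p else t)"
  have setus': "set us' = Bs" using vs Bs(1) by (auto simp: us'_def)
  show ?case
  proof (rule exI[of _ us'], rule exI[of _ a'], intro conjI allI impI ballI)
    show "distinct us'" using vs dus by (auto simp: us'_def)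
    show "independent (set us')" using setus' Bs(3) by simp
  next
    fix p q assume "p \<le> q" "q < length us'"
    then show "a' p \<le> a' q" using sa ats lt by (auto simp: a'_def) (meson less_imp_le)
  next
    fix p assume "p < length us'"
    then show "a' p \<in> set (ts @ [t])" using ats by (auto simp: a'_def)
  next
    fix t' assume t': "t' \<in> set (ts @ [t])"
    show "Z t' = span ((!) us' ` {p. p < length us' \<and> a' p \<le> t'})"
    proof (cases "t' = t")
      case True
      have "(!) us' ` {p. p < length us' \<and> a' p \<le> t'} = set us'"
        using True ats lt by (auto simp: a'_def in_set_conv_nth less_imp_le)
      then show ?thesis using setus' Bs span_subspace[of Bs "Z t"] Zsub True by simp
    next
      case False
      then have t'ts: "t' \<in> set ts" "t' < t" using t' lt by auto
      have "{p. p < length us' \<and> a' p \<le> t'} = {p. p < length us \<and> a p \<le> t'}"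
        using t'ts by (auto simp: a'_def us'_def)
      moreover have "\<And>p. p < length us \<Longrightarrow> us' ! p = us ! p" by (simp add: us'_def nth_append)
      ultimately have "(!) us' ` {p. p < length us' \<and> a' p \<le> t'} = (!) us ` {p. p < length us \<and> a p \<le> t'}"
        by auto
      then show ?thesis using Zt t'ts by simp
    qed
  qed
qed

lemma refine:
  fixes Z :: "real \<Rightarrow> 'b set" and T :: "real set" and F :: "'b set"
  assumes Zsub: "\<And>r. subspace (Z r)" and Zmono: "\<And>r s. r \<le> s \<Longrightarrow> Z r \<subseteq> Z s"
   and finT: "finite T" and finF: "finite F" and Zspan: "\<And>r. Z r \<subseteq> span F"
   and Zpw: "\<And>r. (\<exists>t\<in>T. t \<le> r) \<Longrightarrow> Z r = Z (Max {t\<in>T. t \<le> r})"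
   and Zlow: "\<And>r. \<not>(\<exists>t\<in>T. t \<le> r) \<Longrightarrow> Z r = {0}"
  shows "\<exists>us a. distinct us \<and> independent (set us) \<and>
     (\<forall>p q. p \<le> q \<longrightarrow> q < length us \<longrightarrow> a p \<le> a q) \<and> (\<forall>p<length us. a p \<in> T) \<and>
     (\<forall>r. Z r = span ((!) us ` {p. p < length us \<and> a p \<le> r}))"
proof -
  obtain us a where dus: "distinct us" and ius: "independent (set us)"
    and sa: "\<forall>p q. p \<le> q \<longrightarrow> q < length us \<longrightarrow> a p \<le> a q" and ats: "\<forall>p<length us. a p \<in> T"
    and Zt: "\<forall>t\<in>T. Z t = span ((!) us ` {p. p < length us \<and> a p \<le> t})"
    using refine_list[of Z F "sorted_list_of_set T", OF Zsub Zmono finF Zspan] finT by auto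
  show ?thesis
  proof (rule exI[of _ us], rule exI[of _ a], intro conjI allI impI dus ius sa ats)
    fix r
    show "Z r = span ((!) us ` {p. p < length us \<and> a p \<le> r})"
    proof (cases "\<exists>t\<in>T. t \<le> r")
      case True
      define tm where "tm = Max {t\<in>T. t \<le> r}"
      have fin: "finite {t\<in>T. t \<le> r}" using finT by simp
      have tm: "tm \<in> T" "tm \<le> r" using Max_in[OF fin] True by (auto simp: tm_def)
      have "{p. p < length us \<and> a p \<le> tm} = {p. p < length us \<and> a p \<le> r}"
        using tm ats Max_ge[OF fin] by (auto simp: tm_def)
      then show ?thesis using Zpw[OF True] Zt tm by (simp add: tm_def)
    next
      case False
      then have "{p. p < length us \<and> a p \<le> r} = {}" using ats by auto
      then show ?thesis using Zlow[OF False] by (metis image_empty span_empty)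
    qed
  qed (use sa ats in auto)
qed

end

context vector_space begin

lemma span_image_repr:
  assumes "finite D" "inj_on g D" "x \<in> span (g ` D)"
  shows "\<exists>e. x = (\<Sum>q\<in>D. e q *s g q)"
proof -
  from assms(3) obtain u where "x = (\<Sum>v\<in>g ` D. u v *s v)"
    using span_finite[of "g ` D"] assms(1) by auto
  also have "\<dots> = (\<Sum>q\<in>D. u (g q) *s g q)"
    using sum.reindex[OF assms(2), of "\<lambda>v. u v *s v"] by simp
  finally show ?thesis by (intro exI[of _ "\<lambda>q. u (g q)"])
qed

lemma indep_coeffs:
  assumes ind: "independent (set ws)" and dist: "distinct ws"
    and JD: "J \<subseteq> {..<length ws}" "D \<subseteq> {..<length ws}" "J \<inter> D = {}"
    and eq: "(\<Sum>i\<in>J. c i *s (ws!i)) = (\<Sum>q\<in>D. e q *s (ws!q))"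
    and iJ: "i \<in> J"
  shows "c i = 0"
proof -
  define h where "h i = (if i \<in> J then c i else - e i)" for i
  have finJD: "finite J" "finite D" using JD finite_subset[of _ "{..<length ws}"] by auto
  have inj: "inj_on ((!) ws) (J \<union> D)" using dist JD by (intro inj_on_nth) auto
  have "(\<Sum>i\<in>J \<union> D. h i *s (ws!i)) = (\<Sum>i\<in>J. h i *s (ws!i)) + (\<Sum>i\<in>D. h i *s (ws!i))"
    using finJD JD(3) by (simp add: sum.union_disjoint)
  also have "(\<Sum>i\<in>J. h i *s (ws!i)) = (\<Sum>i\<in>J. c i *s (ws!i))"
    by (rule sum.cong) (auto simp: h_def)
  also have "(\<Sum>i\<in>D. h i *s (ws!i)) = - (\<Sum>q\<in>D. e q *s (ws!q))"
    using JD(3) by (auto simp: h_def sum_negf[symmetric] intro!: sum.cong)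
  finally have z: "(\<Sum>i\<in>J \<union> D. h i *s (ws!i)) = 0" using eq by simp
  define g where "g = the_inv_into (J \<union> D) ((!) ws)"
  have "(\<Sum>v\<in>(!) ws ` (J \<union> D). h (g v) *s v) = (\<Sum>i\<in>J \<union> D. h (g (ws!i)) *s (ws!i))"
    using sum.reindex[OF inj, of "\<lambda>v. h (g v) *s v"] by simp
  also have "\<dots> = (\<Sum>i\<in>J \<union> D. h i *s (ws!i))"
    by (rule sum.cong) (auto simp: g_def the_inv_into_f_f[OF inj])
  finally have z2: "(\<Sum>v\<in>(!) ws ` (J \<union> D). h (g v) *s v) = 0" using z by simp
  have sub: "(!) ws ` (J \<union> D) \<subseteq> set ws" using JD by auto
  have "h (g (ws!i)) = 0"
    by (rule independentD[OF ind _ sub z2]) (use finJD iJ in auto)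
  then show ?thesis using iJ by (simp add: g_def the_inv_into_f_f[OF inj] h_def)
qed

end

lemma downclosed_nat:
  fixes P :: "nat set"
  assumes "finite P" "\<And>p q. q \<le> p \<Longrightarrow> p \<in> P \<Longrightarrow> q \<in> P"
  shows "\<exists>N. P = {0..<N}"
proof (cases "P = {}")
  case True then show ?thesis by (intro exI[of _ 0]) auto
next
  case False
  show ?thesis
    apply (rule exI[of _ "Suc (Max P)"])
    using assms(2)[of _ "Max P"] False Max_ge[OF assms(1)] Max_in[OF assms(1)] by (auto simp: less_Suc_eq_le)
qed

lemma sublevel_max:
  assumes "finite K" "\<exists>t\<in>f`K. t \<le> r"
  shows "sublevel K f r = sublevel K f (Max {t\<in>f`K. t \<le> r})"
proof -
  have fin: "finite {t\<in>f`K. t \<le> r}" using assms(1) by simp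
  have "Max {t\<in>f`K. t \<le> r} \<le> r" using Max_in[OF fin] assms(2) by auto
  then show ?thesis using Max_ge[OF fin] by (auto simp: sublevel_def)
qed

lemma sublevel_low: "\<not>(\<exists>t\<in>f`K. t \<le> r) \<Longrightarrow> sublevel K f r = {}"
  by (auto simp: sublevel_def)

lemma cycles_empty: "cycles K {} d = {0}"
  by (auto simp: cycles_def chain_def fun_eq_iff)

lemma boundaries_empty: "boundaries K {} d = ({0} :: ('a::linorder set \<Rightarrow> 'k::field) set)"
proof -
  have h1: "bd K e = (0 :: 'a set \<Rightarrow> 'k)" if "chain {} (Suc d) e" for e :: "'a set \<Rightarrow> 'k"
  proof -
    have "e = 0" using that by (auto simp: chain_def fun_eq_iff)
    then show ?thesis by simp
  qed
  show ?thesis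
  unfolding boundaries_def
  apply (intro set_eqI iffI)
    apply clarify
  using h1 apply blast
  apply simp
  apply (rule exI[of _ 0])
  apply simp
  done
qed

lemma interval_decomp_exists:
  assumes finK: "finite (K :: ('v::linorder) set set)"
  shows "\<exists>I a d (z :: nat \<Rightarrow> 'v set \<Rightarrow> 'k::field). interval_decomp K f n I a d z"
proof -
  define Z where "Z r = (cycles K (sublevel K f r) n :: ('v set \<Rightarrow> 'k) set)" for r
  define Bd where "Bd s = (boundaries K (sublevel K f s) n :: ('v set \<Rightarrow> 'k) set)" for s
  have Zsub: "V.subspace (Z r)" for r unfolding Z_def by (rule cycles_subspace)
  have Zmono: "r \<le> s \<Longrightarrow> Z r \<subseteq> Z s" for r s
    unfolding Z_def by (intro cycles_mono sublevel_mono)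
  have Zspan: "Z r \<subseteq> V.span (ind ` K)" for r
  proof
    fix x assume "x \<in> Z r"
    then have "chain (sublevel K f r) n x" by (simp add: Z_def cycles_def)
    then show "x \<in> V.span (ind ` K)" by (rule chain_span[OF finK, rotated]) (auto simp: sublevel_def)
  qed
  have Zpw: "(\<exists>t\<in>f`K. t \<le> r) \<Longrightarrow> Z r = Z (Max {t\<in>f`K. t \<le> r})" for r
    unfolding Z_def using sublevel_max[OF finK] by metis
  have Zlow: "\<not>(\<exists>t\<in>f`K. t \<le> r) \<Longrightarrow> Z r = {0}" for r
    unfolding Z_def using sublevel_low cycles_empty by metis
  obtain us a where dus: "distinct us" and ius: "V.independent (set us)"
    and sa: "\<forall>p q. p \<le> q \<longrightarrow> q < length us \<longrightarrow> a p \<le> a q" and aT: "\<forall>p<length us. a p \<in> f ` K"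
    and Zus: "\<forall>r. Z r = V.span ((!) us ` {p. p < length us \<and> a p \<le> r})"
    using V.refine[of Z "f ` K" "ind ` K", OF Zsub Zmono _ _ Zspan Zpw Zlow] finK by auto
  have Bsub: "V.subspace (Bd s)" for s unfolding Bd_def by (rule boundaries_subspace)
  have Bmono: "s \<le> t \<Longrightarrow> Bd s \<subseteq> Bd t" for s t
    unfolding Bd_def by (intro boundaries_mono sublevel_mono)
  have Bleast: "\<exists>s0. X \<inter> Bd s0 \<noteq> {} \<and> (\<forall>s. X \<inter> Bd s \<noteq> {} \<longrightarrow> s0 \<le> s)"
    if X0: "0 \<notin> X" and ex: "\<exists>s. X \<inter> Bd s \<noteq> {}" for X
  proof -
    define S' where "S' = {t \<in> f`K. X \<inter> Bd t \<noteq> {}}"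
    have key: "(\<exists>t\<in>f`K. t \<le> s) \<and> Max {t\<in>f`K. t \<le> s} \<in> S' \<and> Max {t\<in>f`K. t \<le> s} \<le> s"
      if "X \<inter> Bd s \<noteq> {}" for s
    proof -
      have ex1: "\<exists>t\<in>f`K. t \<le> s"
      proof (rule ccontr)
        assume "\<not> (\<exists>t\<in>f`K. t \<le> s)"
        then have "Bd s = {0}" unfolding Bd_def using sublevel_low boundaries_empty by metis
        then show False using that X0 by auto
      qed
      have fin: "finite {t\<in>f`K. t \<le> s}" using finK by simp
      have "Max {t\<in>f`K. t \<le> s} \<in> {t\<in>f`K. t \<le> s}" using Max_in[OF fin] ex1 by auto
      moreover have "Bd s = Bd (Max {t\<in>f`K. t \<le> s})"
        unfolding Bd_def using sublevel_max[OF finK ex1] by metis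
      ultimately show ?thesis using ex1 that by (auto simp: S'_def)
    qed
    have finS: "finite S'" using finK by (simp add: S'_def)
    have neS: "S' \<noteq> {}" using key ex by blast
    show ?thesis
    proof (rule exI[of _ "Min S'"], intro conjI allI impI)
      show "X \<inter> Bd (Min S') \<noteq> {}" using Min_in[OF finS neS] by (auto simp: S'_def)
    next
      fix s assume "X \<inter> Bd s \<noteq> {}"
      then show "Min S' \<le> s" using key Min_le[OF finS] by (meson order_trans)
    qed
  qed
  obtain ws and \<delta> :: "nat \<Rightarrow> ereal" where len: "length ws = length us" and dws: "distinct ws"
    and iws: "V.independent (set ws)"
    and tk: "\<forall>p \<le> length us. V.span (set (take p ws)) = V.span (set (take p us))"
    and dB: "\<forall>p<length us. \<forall>s. \<delta> p \<le> ereal s \<longrightarrow> ws!p \<in> Bd s"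
    and Bsp: "\<forall>s. Bd s \<inter> V.span (set us) \<subseteq> V.span ((!) ws ` {p. p < length us \<and> \<delta> p \<le> ereal s})"
    using V.pivot[of Bd, OF Bsub Bmono Bleast ius dus] by blast
  have ZW: "Z r = V.span ((!) ws ` {p. p < length us \<and> a p \<le> r})" for r
  proof -
    have "\<exists>N. {p. p < length us \<and> a p \<le> r} = {0..<N}"
      by (rule downclosed_nat) (use sa in \<open>auto intro: order_trans\<close>)
    then obtain N where N: "{p. p < length us \<and> a p \<le> r} = {0..<N}" by blast
    have Nle: "N \<le> length us"
    proof (rule ccontr)
      assume "\<not> N \<le> length us"
      then have "length us \<in> {0..<N}" by simp
      then show False using N by blast
    qed
    have "(!) us ` {0..<N} = set (take N us)" by (rule nth_image[OF Nle])
    moreover have "(!) ws ` {0..<N} = set (take N ws)" by (rule nth_image) (use Nle len in simp)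
    ultimately show ?thesis using Zus tk Nle N by simp
  qed
  have spws: "V.span (set ws) = V.span (set us)" using tk len by auto
  define I where "I = {p. p < length us \<and> ereal (a p) < \<delta> p}"
  have part1: "finite I" by (simp add: I_def)
  have part2: "\<forall>i\<in>I. ereal (a i) < \<delta> i \<and> ws ! i \<in> cycles K (sublevel K f (a i)) n"
  proof
    fix i assume i: "i \<in> I"
    have "ws ! i \<in> V.span ((!) ws ` {p. p < length us \<and> a p \<le> a i})"
      using i by (auto simp: I_def intro!: V.span_base)
    then show "ereal (a i) < \<delta> i \<and> ws ! i \<in> cycles K (sublevel K f (a i)) n"
      using ZW[of "a i"] i by (auto simp: Z_def I_def)
  qed
  have part3: "\<forall>r. \<forall>i\<in>I. \<delta> i \<le> ereal r \<longrightarrow> ws ! i \<in> boundaries K (sublevel K f r) n"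
    using dB by (auto simp: I_def Bd_def)
  have part4: "(\<forall>c. lincomb c J ((!) ws) \<in> boundaries K (sublevel K f r) n \<longrightarrow> (\<forall>i\<in>J. c i = 0)) \<and>
        (\<forall>y\<in>cycles K (sublevel K f r) n. \<exists>c. y - lincomb c J ((!) ws) \<in> boundaries K (sublevel K f r) n)"
    if J: "J = {i\<in>I. a i \<le> r \<and> ereal r < \<delta> i}" for r J
  proof (intro conjI allI impI ballI)
    fix c i assume lc: "lincomb c J ((!) ws) \<in> boundaries K (sublevel K f r) n" and iJ: "i \<in> J"
    define D where "D = {p. p < length us \<and> \<delta> p \<le> ereal r}"
    have Jsub: "J \<subseteq> {..<length ws}" using J len by (auto simp: I_def)
    have lcs: "lincomb c J ((!) ws) = (\<Sum>i\<in>J. sc (c i) (ws ! i))" by (rule lincomb_sum)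
    have "lincomb c J ((!) ws) \<in> V.span (set ws)"
      unfolding lcs using Jsub by (intro V.span_sum V.span_scale V.span_base) auto
    then have "lincomb c J ((!) ws) \<in> V.span ((!) ws ` D)"
      using lc Bsp spws by (auto simp: Bd_def D_def)
    moreover have "inj_on ((!) ws) D" using dws len by (intro inj_on_nth) (auto simp: D_def)
    ultimately obtain e where e: "lincomb c J ((!) ws) = (\<Sum>q\<in>D. sc (e q) (ws ! q))"
      using V.span_image_repr[of D "(!) ws"] by (auto simp: D_def)
    show "c i = 0"
      apply (rule V.indep_coeffs[where D=D and e=e and c=c, OF iws dws Jsub _ _ _ iJ])
      using len J e lcs by (auto simp: D_def)
  next
    fix y :: "'v set \<Rightarrow> 'k" assume y: "y \<in> cycles K (sublevel K f r) n"
    define P where "P = {p. p < length us \<and> a p \<le> r}"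
    have "y \<in> V.span ((!) ws ` P)" using y ZW[of r] by (simp add: Z_def P_def)
    moreover have "inj_on ((!) ws) P" using dws len by (intro inj_on_nth) (auto simp: P_def)
    ultimately obtain c where c: "y = (\<Sum>q\<in>P. sc (c q) (ws ! q))"
      using V.span_image_repr[of P "(!) ws"] by (auto simp: P_def)
    have JP: "J \<subseteq> P" using J by (auto simp: I_def P_def)
    have finP: "finite P" by (simp add: P_def)
    have "y - lincomb c J ((!) ws) = (\<Sum>q\<in>P - J. sc (c q) (ws ! q))"
      unfolding c lincomb_sum using sum.subset_diff[OF JP finP, of "\<lambda>q. sc (c q) (ws ! q)"] by (simp only: add_diff_cancel)
    also have "\<dots> \<in> boundaries K (sublevel K f r) n"
    proof (rule V.subspace_sum[OF boundaries_subspace])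
      fix q assume q: "q \<in> P - J"
      then have "\<delta> q \<le> ereal r" using J by (auto simp: P_def I_def not_less) (meson ereal_less_eq(3) order_trans)
      then have "ws ! q \<in> Bd r" using dB q by (auto simp: P_def)
      then show "sc (c q) (ws ! q) \<in> boundaries K (sublevel K f r) n"
        using V.subspace_scale[OF boundaries_subspace] by (auto simp: Bd_def)
    qed
    finally show "\<exists>c. y - lincomb c J ((!) ws) \<in> boundaries K (sublevel K f r) n" by blast
  qed
  have "interval_decomp K f n I a \<delta> ((!) ws)"
    unfolding interval_decomp_def Let_def using part1 part2 part3 part4 by blast
  then show ?thesis by blast
qed

lemma barcode_decomp:
  assumes "finite (K :: ('v::linorder) set set)"
  shows "\<exists>I a d (z :: nat \<Rightarrow> 'v set \<Rightarrow> 'k::field). interval_decomp K f n I a d z \<and>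
           barcode TYPE('k) K f n = image_mset (\<lambda>i. (a i, d i)) (mset_set I)"
proof -
  let ?P = "\<lambda>B. \<exists>I a d (z :: nat \<Rightarrow> 'v set \<Rightarrow> 'k). interval_decomp K f n I a d z \<and> B = image_mset (\<lambda>i. (a i, d i)) (mset_set I)"
  obtain I a d and z :: "nat \<Rightarrow> 'v set \<Rightarrow> 'k" where "interval_decomp K f n I a d z"
    using interval_decomp_exists[OF assms] by blast
  then have "?P (image_mset (\<lambda>i. (a i, d i)) (mset_set I))" by blast
  then have "?P (SOME B. ?P B)" by (rule someI)
  then show ?thesis unfolding barcode_def by metis
qed

lemma sc_finite: "simplicial_complex K \<Longrightarrow> \<sigma> \<in> K \<Longrightarrow> finite \<sigma>"
  unfolding simplicial_complex_def by blast

lemma sc_closed: "simplicial_complex K \<Longrightarrow> \<sigma> \<in> K \<Longrightarrow> \<tau> \<subseteq> \<sigma> \<Longrightarrow> \<tau> \<noteq> {} \<Longrightarrow> \<tau> \<in> K"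
  unfolding simplicial_complex_def by blast

lemma face_sign_insert:
  assumes "u \<notin> \<tau>"
  shows "face_sign (insert u \<tau>) \<tau> = (-1) ^ card {x\<in>insert u \<tau>. x < u}"
proof -
  have "insert u \<tau> - \<tau> = {u}" using assms by auto
  then show ?thesis by (simp add: face_sign_def)
qed

lemma inner_zero:
  assumes K: "simplicial_complex K" and \<sigma>K: "\<sigma> \<in> K" and \<tau>ne: "\<tau> \<noteq> {}"
  shows "(\<Sum>\<rho>\<in>{\<rho>\<in>{\<rho>\<in>K. \<tau> \<subseteq> \<rho> \<and> card \<rho> = Suc (card \<tau>)}. \<rho> \<subseteq> \<sigma> \<and> card \<sigma> = Suc (card \<rho>)}.
            (face_sign \<rho> \<tau> :: 'k::field) * face_sign \<sigma> \<rho>) = 0"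
proof (cases "{\<rho>\<in>{\<rho>\<in>K. \<tau> \<subseteq> \<rho> \<and> card \<rho> = Suc (card \<tau>)}. \<rho> \<subseteq> \<sigma> \<and> card \<sigma> = Suc (card \<rho>)} = {}")
  case True then show ?thesis by (simp only: sum.empty)
next
  case False
  define M where "M = {\<rho>\<in>{\<rho>\<in>K. \<tau> \<subseteq> \<rho> \<and> card \<rho> = Suc (card \<tau>)}. \<rho> \<subseteq> \<sigma> \<and> card \<sigma> = Suc (card \<rho>)}"
  from False obtain \<rho>0 where \<rho>0: "\<rho>0 \<in> K" "\<tau> \<subseteq> \<rho>0" "card \<rho>0 = Suc (card \<tau>)" "\<rho>0 \<subseteq> \<sigma>" "card \<sigma> = Suc (card \<rho>0)"
    by blast
  have fin\<sigma>: "finite \<sigma>" using sc_finite[OF K \<sigma>K] .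
  have \<tau>\<sigma>: "\<tau> \<subseteq> \<sigma>" using \<rho>0(2,4) by (rule subset_trans)
  have fin\<tau>: "finite \<tau>" using finite_subset[OF \<tau>\<sigma> fin\<sigma>] .
  have "card (\<sigma> - \<tau>) = 2" using card_Diff_subset[OF fin\<tau> \<tau>\<sigma>] \<rho>0(3,5) by simp
  then obtain x y where xy: "\<sigma> - \<tau> = {x, y}" "x \<noteq> y" by (meson card_2_iff)
  obtain u w where uw: "\<sigma> - \<tau> = {u, w}" "u < w"
  proof (cases "x < y")
    case True then show ?thesis using xy that by blast
  next
    case False then have "y < x" using xy(2) by auto
    then show ?thesis using xy that by (metis insert_commute)
  qed
  have u\<tau>: "u \<notin> \<tau>" "w \<notin> \<tau>" "u \<noteq> w" using uw by auto
  have \<sigma>eq: "\<sigma> = insert u (insert w \<tau>)" using uw \<rho>0 by auto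
  have clos: "\<And>\<rho>. \<rho> \<subseteq> \<sigma> \<Longrightarrow> \<rho> \<noteq> {} \<Longrightarrow> \<rho> \<in> K"
    using sc_closed[OF K \<sigma>K] by blast
  have sub: "insert u \<tau> \<in> K" "insert w \<tau> \<in> K"
    by (rule clos, use \<sigma>eq in auto)+
  have Meq: "M = {insert u \<tau>, insert w \<tau>}"
  proof
    show "M \<subseteq> {insert u \<tau>, insert w \<tau>}"
    proof
      fix \<rho> assume \<rho>: "\<rho> \<in> M"
      then have \<rho>': "\<tau> \<subseteq> \<rho>" "\<rho> \<subseteq> \<sigma>" "card \<rho> = Suc (card \<tau>)" by (auto simp: M_def)
      have "card (\<rho> - \<tau>) = 1" using card_Diff_subset[OF fin\<tau> \<rho>'(1)] \<rho>'(3) by simp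
      then obtain z where z: "\<rho> - \<tau> = {z}" by (auto simp: card_1_singleton_iff)
      then have "z \<in> {u, w}" using \<rho>' uw by auto
      moreover have "\<rho> = insert z \<tau>" using z \<rho>' by auto
      ultimately show "\<rho> \<in> {insert u \<tau>, insert w \<tau>}" by auto
    qed
  next
    have c1: "card (insert u \<tau>) = Suc (card \<tau>)" "card (insert w \<tau>) = Suc (card \<tau>)"
      using u\<tau> fin\<tau> by simp_all
    have c2: "card \<sigma> = Suc (Suc (card \<tau>))" using \<sigma>eq u\<tau> fin\<tau> by simp
    show "{insert u \<tau>, insert w \<tau>} \<subseteq> M"
    proof -
      have "insert u \<tau> \<subseteq> \<sigma>" "insert w \<tau> \<subseteq> \<sigma>" using \<sigma>eq by auto
      then show ?thesis unfolding M_def using sub c1 c2 by auto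
    qed
  qed
  define A where "A = card {x\<in>\<tau>. x < u}"
  define B where "B = card {x\<in>\<tau>. x < w}"
  have s1: "face_sign (insert u \<tau>) \<tau> = ((-1) ^ A :: 'k)"
  proof -
    have "{x\<in>insert u \<tau>. x < u} = {x\<in>\<tau>. x < u}" by auto
    then show ?thesis using face_sign_insert[OF u\<tau>(1)] by (simp add: A_def)
  qed
  have s2: "face_sign (insert w \<tau>) \<tau> = ((-1) ^ B :: 'k)"
  proof -
    have "{x\<in>insert w \<tau>. x < w} = {x\<in>\<tau>. x < w}" by auto
    then show ?thesis using face_sign_insert[OF u\<tau>(2)] by (simp add: B_def)
  qed
  have s3: "face_sign \<sigma> (insert u \<tau>) = ((-1) ^ Suc B :: 'k)"
  proof -
    have "\<sigma> - insert u \<tau> = {w}" using \<sigma>eq u\<tau> by auto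
    moreover have "{x\<in>\<sigma>. x < w} = insert u {x\<in>\<tau>. x < w}" using \<sigma>eq uw by auto
    moreover have "card (insert u {x\<in>\<tau>. x < w}) = Suc B" using u\<tau> fin\<tau> by (simp add: B_def)
    ultimately show ?thesis by (simp add: face_sign_def)
  qed
  have s4: "face_sign \<sigma> (insert w \<tau>) = ((-1) ^ A :: 'k)"
  proof -
    have "\<sigma> - insert w \<tau> = {u}" using \<sigma>eq u\<tau> by auto
    moreover have "{x\<in>\<sigma>. x < u} = {x\<in>\<tau>. x < u}" using \<sigma>eq uw by auto
    ultimately show ?thesis by (simp add: face_sign_def A_def)
  qed
  have ne: "insert u \<tau> \<noteq> insert w \<tau>" using u\<tau> by auto
  have "(\<Sum>\<rho>\<in>M. (face_sign \<rho> \<tau> :: 'k) * face_sign \<sigma> \<rho>) = 0"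
    unfolding Meq using ne s1 s2 s3 s4 by simp
  then show ?thesis unfolding M_def .
qed


lemma bd_bd:
  assumes K: "simplicial_complex K"
  shows "bd K (bd K c) = (0 :: 'a::linorder set \<Rightarrow> 'k::field)"
proof (rule ext)
  fix \<tau> :: "'a set"
  have finK: "finite K" using K by (simp add: simplicial_complex_def)
  show "bd K (bd K c) \<tau> = 0 \<tau>"
  proof (cases "\<tau> = {}")
    case True then show ?thesis by (simp add: bd_def)
  next
    case False
    define R where "R x = {\<rho>\<in>K. x \<subseteq> \<rho> \<and> card \<rho> = Suc (card x)}" for x :: "'a set"
    define fs where "fs \<rho> x = (face_sign \<rho> x :: 'k)" for \<rho> x :: "'a set"
    have "bd K (bd K c) \<tau> = (\<Sum>\<rho>\<in>R \<tau>. fs \<rho> \<tau> * bd K c \<rho>)"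
      using False by (simp add: bd_def R_def fs_def)
    also have "\<dots> = (\<Sum>\<rho>\<in>R \<tau>. \<Sum>\<sigma>\<in>{\<sigma>. \<sigma> \<in> K \<and> \<rho> \<subseteq> \<sigma> \<and> card \<sigma> = Suc (card \<rho>)}. fs \<rho> \<tau> * fs \<sigma> \<rho> * c \<sigma>)"
    proof (rule sum.cong[OF refl])
      fix \<rho> assume "\<rho> \<in> R \<tau>"
      then have "\<rho> \<noteq> {}" using False by (auto simp: R_def)
      then show "fs \<rho> \<tau> * bd K c \<rho> = (\<Sum>\<sigma>\<in>{\<sigma>. \<sigma> \<in> K \<and> \<rho> \<subseteq> \<sigma> \<and> card \<sigma> = Suc (card \<rho>)}. fs \<rho> \<tau> * fs \<sigma> \<rho> * c \<sigma>)"
        by (simp add: bd_def fs_def sum_distrib_left mult.assoc)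
    qed
    also have "\<dots> = (\<Sum>\<sigma>\<in>K. \<Sum>\<rho>\<in>{\<rho>. \<rho> \<in> R \<tau> \<and> (\<rho> \<subseteq> \<sigma> \<and> card \<sigma> = Suc (card \<rho>))}. fs \<rho> \<tau> * fs \<sigma> \<rho> * c \<sigma>)"
      by (rule sum.swap_restrict) (use finK in \<open>auto simp: R_def\<close>)
    also have "\<dots> = (\<Sum>\<sigma>\<in>K. c \<sigma> * (\<Sum>\<rho>\<in>{\<rho>\<in>R \<tau>. \<rho> \<subseteq> \<sigma> \<and> card \<sigma> = Suc (card \<rho>)}. fs \<rho> \<tau> * fs \<sigma> \<rho>))"
      by (simp add: sum_distrib_left mult.commute mult.left_commute)
    also have "\<dots> = 0"
    proof (rule sum.neutral, rule ballI)
      fix \<sigma> assume "\<sigma> \<in> K"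
      then have "(\<Sum>\<rho>\<in>{\<rho>\<in>R \<tau>. \<rho> \<subseteq> \<sigma> \<and> card \<sigma> = Suc (card \<rho>)}. fs \<rho> \<tau> * fs \<sigma> \<rho>) = 0"
        using inner_zero[OF K _ False, of \<sigma>] unfolding R_def fs_def by simp
      then show "c \<sigma> * (\<Sum>\<rho>\<in>{\<rho>\<in>R \<tau>. \<rho> \<subseteq> \<sigma> \<and> card \<sigma> = Suc (card \<rho>)}. fs \<rho> \<tau> * fs \<sigma> \<rho>) = 0"
        by simp
    qed
    finally show ?thesis by simp
  qed
qed

lemma chain_decomp:
  assumes "finite K" "L \<subseteq> K" "chain L d c"
  shows "c = (\<Sum>s\<in>K. sc (c s) (ind s))"
proof
  fix t show "c t = (\<Sum>s\<in>K. sc (c s) (ind s)) t"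
    using assms by (auto simp: sum_fun_apply ind_def chain_def if_distrib cong: if_cong)
qed

lemma bd_chain_in:
  fixes S :: "('a::linorder set \<Rightarrow> 'k::field) set"
  assumes "finite K" "L \<subseteq> K" "chain L d c" "V.subspace S"
    and "\<And>\<tau>. c \<tau> \<noteq> 0 \<Longrightarrow> bd K (ind \<tau>) \<in> S"
  shows "bd K c \<in> S"
proof -
  have "bd K c = (\<Sum>s\<in>K. sc (c s) (bd K (ind s)))"
    by (subst chain_decomp[OF assms(1-3)]) (simp add: bd_sum bd_sc)
  also have "\<dots> \<in> S"
  proof (rule V.subspace_sum[OF assms(4)])
    fix s assume "s \<in> K"
    show "sc (c s) (bd K (ind s)) \<in> S"
    proof (cases "c s = 0")
      case True
      then have "sc (c s) (bd K (ind s)) = 0" by (simp add: fun_eq_iff)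
      then show ?thesis using V.subspace_0[OF assms(4)] by (simp only:)
    next
      case False then show ?thesis using assms(5) V.subspace_scale[OF assms(4)] by blast
    qed
  qed
  finally show ?thesis .
qed

lemma lincomb_split:
  assumes "finite J" "j \<in> J"
  shows "lincomb c J z = sc (c j) (z j) + lincomb c (J - {j}) z"
  using assms by (simp add: lincomb_sum sum.remove)

lemma lincomb_single:
  assumes "finite J" "k \<in> J"
  shows "lincomb (\<lambda>i. if i = k then x else 0) J z = sc x (z k)"
proof -
  have "lincomb (\<lambda>i. if i = k then x else 0) J z = sc x (z k) + lincomb (\<lambda>i. if i = k then x else 0) (J - {k}) z"
    using lincomb_split[OF assms, where c="\<lambda>i. if i = k then x else 0"] by simp
  also have "lincomb (\<lambda>i. if i = k then x else 0) (J - {k}) z = 0"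
    by (simp add: lincomb_def fun_eq_iff)
  finally show ?thesis by (simp add: sc_def)
qed

lemma lincomb_pair:
  assumes "finite J" "k \<in> J" "j \<in> J" "k \<noteq> j"
  shows "lincomb (\<lambda>i. if i = k then x else if i = j then y else 0) J z = sc x (z k) + sc y (z j)"
proof -
  let ?c = "\<lambda>i. if i = k then x else if i = j then y else 0"
  have "lincomb ?c J z = sc x (z k) + lincomb ?c (J - {k}) z"
    using lincomb_split[OF assms(1,2), where c="?c"] by simp
  also have "lincomb ?c (J - {k}) z = sc y (z j) + lincomb ?c (J - {k} - {j}) z"
    using lincomb_split[of "J - {k}" j, where c="?c"] assms by simp
  also have "lincomb ?c (J - {k} - {j}) z = 0"
    by (simp add: lincomb_def fun_eq_iff)
  finally show ?thesis by (simp add: sc_def plus_fun_def)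
qed

lemma sublevel_shift:
  assumes "sup_norm_le K f g e"
  shows "sublevel K f q \<subseteq> sublevel K g (q + e)"
  using assms by (auto simp: sublevel_def sup_norm_le_def abs_le_iff)

lemma sup_norm_sym: "sup_norm_le K f g e \<Longrightarrow> sup_norm_le K g f e"
  by (auto simp: sup_norm_le_def abs_minus_commute)

lemma Inf_ereal_le: "x \<in> A \<Longrightarrow> Inf A \<le> (x :: ereal)"
  by (rule Inf_lower)

lemma finite_sublevel_vals:
  fixes f :: "'a \<Rightarrow> real"
  assumes "finite K"
  shows "\<exists>\<delta>>0. \<forall>\<tau>\<in>K. f \<tau> > b \<longrightarrow> f \<tau> \<ge> b + \<delta>"
proof -
  let ?V = "{f \<tau> | \<tau>. \<tau> \<in> K \<and> f \<tau> > b}"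
  have fin: "finite ?V" using assms by simp
  show ?thesis
  proof (cases "?V = {}")
    case True
    have "(1::real) > 0 \<and> (\<forall>\<tau>\<in>K. f \<tau> > b \<longrightarrow> f \<tau> \<ge> b + 1)" using True by auto
    then show ?thesis by blast
  next
    case False
    have "Min ?V > b" using Min_in[OF fin False] by auto
    then show ?thesis using Min_le[OF fin] by (intro exI[of _ "Min ?V - b"]) force
  qed
qed

lemma finite_sublevel_vals_below:
  fixes f :: "'a \<Rightarrow> real"
  assumes "finite K"
  shows "\<exists>\<delta>>0. \<forall>\<tau>\<in>K. f \<tau> < b \<longrightarrow> f \<tau> \<le> b - \<delta>"
proof -
  let ?V = "{f \<tau> | \<tau>. \<tau> \<in> K \<and> f \<tau> < b}"
  have fin: "finite ?V" using assms by simp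
  show ?thesis
  proof (cases "?V = {}")
    case True
    have "(1::real) > 0 \<and> (\<forall>\<tau>\<in>K. f \<tau> < b \<longrightarrow> f \<tau> \<le> b - 1)" using True by auto
    then show ?thesis by blast
  next
    case False
    have "Max ?V < b" using Max_in[OF fin False] by auto
    then show ?thesis using Max_ge[OF fin] by (intro exI[of _ "b - Max ?V"]) force
  qed
qed

lemma term_facts:
  fixes \<alpha> :: "'v::linorder set \<Rightarrow> 'k::field"
  assumes finK: "finite K" and ab: "a < b"
    and T: "termination_scale K f n a \<alpha> = ereal b"
  shows "\<forall>q<b. \<alpha> \<notin> boundaries K (sublevel K f q) n"
    and "\<alpha> \<in> boundaries K (sublevel K f b) n"
    and "\<exists>\<sigma>\<in>K. f \<sigma> = b"
proof -
  let ?S = "{ereal q | q. a \<le> q \<and> \<alpha> \<in> boundaries K (sublevel K f q) n}"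
  have TA: "\<alpha> \<notin> boundaries K (sublevel K f q) n" if "q < b" for q
  proof
    assume q: "\<alpha> \<in> boundaries K (sublevel K f q) n"
    show False
    proof (cases "a \<le> q")
      case True
      then have "Inf ?S \<le> ereal q" using q by (intro Inf_lower) auto
      then show False using T that unfolding termination_scale_def by simp
    next
      case False
      then have "sublevel K f q \<subseteq> sublevel K f a" by (intro sublevel_mono) auto
      then have "\<alpha> \<in> boundaries K (sublevel K f a) n"
        using q boundaries_mono by blast
      then have "Inf ?S \<le> ereal a" by (intro Inf_lower) auto
      then show False using T ab unfolding termination_scale_def by simp
    qed
  qed
  then show "\<forall>q<b. \<alpha> \<notin> boundaries K (sublevel K f q) n" by blast
  obtain \<delta> where \<delta>: "\<delta> > 0" "\<forall>\<tau>\<in>K. f \<tau> > b \<longrightarrow> f \<tau> \<ge> b + \<delta>"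
    using finite_sublevel_vals[OF finK] by blast
  have "Inf ?S < ereal (b + \<delta>)" using T \<delta>(1) unfolding termination_scale_def by simp
  then obtain x where x: "x \<in> ?S" "x < ereal (b + \<delta>)" by (auto simp: Inf_less_iff)
  then obtain q where q: "x = ereal q" "a \<le> q" "\<alpha> \<in> boundaries K (sublevel K f q) n" by blast
  have "q < b + \<delta>" using x q by simp
  then have "sublevel K f q \<subseteq> sublevel K f b" using \<delta>(2) by (force simp: sublevel_def)
  then show "\<alpha> \<in> boundaries K (sublevel K f b) n" using q boundaries_mono by blast
  then show "\<exists>\<sigma>\<in>K. f \<sigma> = b"
  proof -
    assume Bb: "\<alpha> \<in> boundaries K (sublevel K f b) n"
    show ?thesis
    proof (rule ccontr)
      assume nb: "\<not> (\<exists>\<sigma>\<in>K. f \<sigma> = b)"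
      obtain \<delta>' where \<delta>': "\<delta>' > 0" "\<forall>\<tau>\<in>K. f \<tau> < b \<longrightarrow> f \<tau> \<le> b - \<delta>'"
        using finite_sublevel_vals_below[OF finK] by blast
      have "sublevel K f b \<subseteq> sublevel K f (b - \<delta>')" using nb \<delta>'(2) by (force simp: sublevel_def)
      then have "\<alpha> \<in> boundaries K (sublevel K f (b - \<delta>')) n" using Bb boundaries_mono by blast
      then show False using TA[of "b - \<delta>'"] \<delta>'(1) by simp
    qed
  qed
qed

lemma dec_cyc: "interval_decomp K f n I a d z \<Longrightarrow> i \<in> I \<Longrightarrow> ereal (a i) < d i \<and> z i \<in> cycles K (sublevel K f (a i)) n"
  unfolding interval_decomp_def by blast

lemma dec_death: "interval_decomp K f n I a d z \<Longrightarrow> i \<in> I \<Longrightarrow> d i \<le> ereal r \<Longrightarrow> z i \<in> boundaries K (sublevel K f r) n"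
  unfolding interval_decomp_def by blast

lemma dec_indep: "interval_decomp K f n I a d z \<Longrightarrow> lincomb c {i\<in>I. a i \<le> r \<and> ereal r < d i} z \<in> boundaries K (sublevel K f r) n
   \<Longrightarrow> i \<in> I \<Longrightarrow> a i \<le> r \<Longrightarrow> ereal r < d i \<Longrightarrow> c i = 0"
  unfolding interval_decomp_def Let_def by blast

lemma dec_span: "interval_decomp K f n I a d z \<Longrightarrow> y \<in> cycles K (sublevel K f r) n
   \<Longrightarrow> \<exists>c. y - lincomb c {i\<in>I. a i \<le> r \<and> ereal r < d i} z \<in> boundaries K (sublevel K f r) n"
  unfolding interval_decomp_def Let_def by blast

lemma dec_fin: "interval_decomp K f n I a d z \<Longrightarrow> finite I"
  unfolding interval_decomp_def by blast

theorem theorem4p2: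
  fixes K :: "('v::linorder) set set"
    and f g :: "'v set \<Rightarrow> real"
    and n :: nat
    and \<alpha> :: "'v set \<Rightarrow> 'k::field"
    and a b \<epsilon> a' :: real
    and b' :: ereal
    and M :: "((real \<times> ereal) \<times> (real \<times> ereal)) multiset"
  assumes K: "simplicial_complex K"
    and f_filt: "filtration K f" and f_inj: "inj_on f K"
    and n_pos: "1 \<le> n"
    and bar: "(a, ereal b) \<in># barcode TYPE('k) K f n"
    and alpha_cycle: "\<alpha> \<in> cycles K (sublevel K f a) n"
    and alpha_nontriv: "\<alpha> \<notin> boundaries K (sublevel K f a) n"
    and alpha_birth: "birth_scale K f n a \<alpha> = ereal a"
    and alpha_term: "termination_scale K f n a \<alpha> = ereal b"
    and eps: "\<epsilon> < (b - a) / 4"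
    and others: "\<forall>x\<in># barcode TYPE('k) K f n - {#(a, ereal b)#}.
                    fst x > a + 2 * \<epsilon> \<or> snd x < ereal (b - 2 * \<epsilon>)"
    and g_filt: "filtration K g" and g_inj: "inj_on g K"
    and fg: "sup_norm_le K f g \<epsilon>"
    and M: "stability_matching \<epsilon> (barcode TYPE('k) K f n) (barcode TYPE('k) K g n) M"
    and matched: "((a, ereal b), (a', b')) \<in># M"
  shows "(\<exists>r. \<alpha> \<in> cycles K (sublevel K g r) n \<and> \<alpha> \<notin> boundaries K (sublevel K g r) n
              \<and> termination_scale K g n r \<alpha> = b')
       \<and> (let R\<^sub>u = Inf {ereal \<bar>f \<tau> - b\<bar> | \<tau>. birth_simplex TYPE('k) K f \<tau> \<and> card \<tau> = n + 2 \<and> f \<tau> > b};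
              R\<^sub>l = Inf {ereal \<bar>f \<tau> - b\<bar> | \<tau>. terminal_simplex TYPE('k) K f \<tau> \<and> card \<tau> = n + 2 \<and> f \<tau> < b}
          in ereal (2 * \<epsilon>) \<le> min R\<^sub>u R\<^sub>l \<longrightarrow> (\<exists>\<sigma>\<in>K. f \<sigma> = b \<and> ereal (g \<sigma>) = b'))"
proof -
  have finK: "finite K" using K by (simp add: simplicial_complex_def)
  define Bf where "Bf q = (boundaries K (sublevel K f q) n :: ('v set \<Rightarrow> 'k) set)" for q
  define Bg where "Bg q = (boundaries K (sublevel K g q) n :: ('v set \<Rightarrow> 'k) set)" for q
  have Bf_sub: "V.subspace (Bf q)" for q unfolding Bf_def by (rule boundaries_subspace)
  have Bg_sub: "V.subspace (Bg q)" for q unfolding Bg_def by (rule boundaries_subspace)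
  have Bf_mono: "q \<le> q' \<Longrightarrow> Bf q \<subseteq> Bf q'" for q q'
    unfolding Bf_def by (intro boundaries_mono sublevel_mono)
  have Bg_mono: "q \<le> q' \<Longrightarrow> Bg q \<subseteq> Bg q'" for q q'
    unfolding Bg_def by (intro boundaries_mono sublevel_mono)
  have Bfg: "Bf q \<subseteq> Bg (q + \<epsilon>)" for q
    unfolding Bf_def Bg_def by (intro boundaries_mono sublevel_shift fg)
  have Bgf: "Bg q \<subseteq> Bf (q + \<epsilon>)" for q
    unfolding Bf_def Bg_def by (intro boundaries_mono sublevel_shift) (rule sup_norm_sym[OF fg])
  obtain If af df and zf :: "nat \<Rightarrow> 'v set \<Rightarrow> 'k" where decf: "interval_decomp K f n If af df zf"
    and bcf: "barcode TYPE('k) K f n = image_mset (\<lambda>i. (af i, df i)) (mset_set If)"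
    using barcode_decomp[OF finK] by blast
  obtain Ig ag dg and zg :: "nat \<Rightarrow> 'v set \<Rightarrow> 'k" where decg: "interval_decomp K g n Ig ag dg zg"
    and bcg: "barcode TYPE('k) K g n = image_mset (\<lambda>i. (ag i, dg i)) (mset_set Ig)"
    using barcode_decomp[OF finK] by blast
  have finIf: "finite If" and finIg: "finite Ig" using decf decg by (simp_all add: interval_decomp_def)
  obtain i0 where i0: "i0 \<in> If" "af i0 = a" "df i0 = ereal b"
    using bar bcf finIf by auto
  have others': "\<forall>l\<in>If - {i0}. af l > a + 2 * \<epsilon> \<or> df l < ereal (b - 2 * \<epsilon>)"
  proof -
    have "mset_set If = add_mset i0 (mset_set (If - {i0}))" using mset_set.remove[OF finIf i0(1)] .
    then have "barcode TYPE('k) K f n - {#(a, ereal b)#} = image_mset (\<lambda>i. (af i, df i)) (mset_set (If - {i0}))"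
      using bcf i0 by simp
    then show ?thesis using others finIf by auto
  qed
  have ab_pair: "(a', b') \<in># barcode TYPE('k) K g n"
  proof -
    have "(a', b') \<in># image_mset snd M" using matched by force
    then show ?thesis using M unfolding stability_matching_def by (meson mset_subset_eqD)
  qed
  obtain j where j: "j \<in> Ig" "ag j = a'" "dg j = b'" using ab_pair bcg finIg by auto
  have aa': "\<bar>a - a'\<bar> \<le> \<epsilon>" and bb': "ereal_close \<epsilon> (ereal b) b'"
    using M matched unfolding stability_matching_def by fastforce+
  have "\<alpha> \<noteq> 0"
  proof
    assume "\<alpha> = 0"
    then have "\<alpha> = bd K 0" by simp
    moreover have "chain (sublevel K f a) (Suc n) (0 :: 'v set \<Rightarrow> 'k)" by simp
    ultimately show False using alpha_nontriv unfolding boundaries_def by blast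
  qed
  then obtain \<sigma>0 where "\<alpha> \<sigma>0 \<noteq> 0" by (auto simp: fun_eq_iff)
  then have "\<sigma>0 \<in> K" using alpha_cycle by (auto simp: cycles_def chain_def sublevel_def)
  then have eps0: "\<epsilon> \<ge> 0" using fg unfolding sup_norm_le_def by force
  have ab: "a + 4 * \<epsilon> < b" using eps by simp
  have "\<exists>v. b' = ereal v \<and> \<bar>b - v\<bar> \<le> \<epsilon>"
    using bb' eps0 unfolding ereal_close_def by auto
  then obtain v where v: "b' = ereal v" "\<bar>b - v\<bar> \<le> \<epsilon>" by blast
  have TA: "\<forall>q<b. \<alpha> \<notin> Bf q" and TB: "\<alpha> \<in> Bf b" and TC: "\<exists>\<sigma>\<in>K. f \<sigma> = b"
    using term_facts[OF finK _ alpha_term] ab eps0 unfolding Bf_def by auto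
  have GA: "\<alpha> \<notin> Bg q" if "q < b - \<epsilon>" for q
    using Bgf[of q] TA that by force
  define r where "r = a + \<epsilon>"
  have alpha_g: "\<alpha> \<in> cycles K (sublevel K g r) n"
    using cycles_mono[OF sublevel_shift[OF fg, of a]] alpha_cycle by (auto simp: r_def)
  have jr: "ag j \<le> a + \<epsilon>" using j aa' by (simp add: abs_le_iff)
  have jd: "dg j \<ge> ereal (b - \<epsilon>)" using j v by (simp add: abs_le_iff)
  have U: "k = j" if k: "k \<in> Ig" "ag k \<le> a + \<epsilon>" "dg k \<ge> ereal (b - \<epsilon>)" for k
  proof (rule ccontr)
    assume kj: "k \<noteq> j"
    define r1 where "r1 = a + 2 * \<epsilon>"
    define J1 where "J1 = {i\<in>If. af i \<le> r1 \<and> ereal r1 < df i}"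
    have finJ1: "finite J1" using finIf by (simp add: J1_def)
    have cyc_shift: "zg i \<in> cycles K (sublevel K f r1) n" if "i \<in> Ig" "ag i \<le> a + \<epsilon>" for i
    proof -
      have "zg i \<in> cycles K (sublevel K g (ag i)) n" using dec_cyc[OF decg that(1)] by blast
      moreover have "sublevel K g (ag i) \<subseteq> sublevel K f (ag i + \<epsilon>)"
        by (rule sublevel_shift[OF sup_norm_sym[OF fg]])
      moreover have "sublevel K f (ag i + \<epsilon>) \<subseteq> sublevel K f r1"
        using that(2) by (intro sublevel_mono) (simp add: r1_def)
      ultimately show ?thesis using cycles_mono by blast
    qed
    obtain c1 where c1: "zg k - lincomb c1 J1 zf \<in> Bf r1"
      using dec_span[OF decf cyc_shift[OF k(1,2)]] unfolding J1_def Bf_def by blast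
    obtain c2 where c2: "zg j - lincomb c2 J1 zf \<in> Bf r1"
      using dec_span[OF decf cyc_shift[OF j(1) jr]] unfolding J1_def Bf_def by blast
    have i0J1: "i0 \<in> J1" using i0 ab eps0 by (simp add: J1_def r1_def)
    have oth: "\<exists>x. df l = ereal x \<and> x < b - 2 * \<epsilon> \<and> r1 < x" if l: "l \<in> J1 - {i0}" for l
    proof -
      have l': "l \<in> If - {i0}" "af l \<le> a + 2 * \<epsilon>" "ereal r1 < df l" using l by (auto simp: J1_def r1_def)
      then have "df l < ereal (b - 2 * \<epsilon>)" using others' by force
      then show ?thesis using l'(3) by (cases "df l") auto
    qed
    define u where "u = Max (insert r1 (real_of_ereal ` df ` (J1 - {i0})))"
    have finU: "finite (insert r1 (real_of_ereal ` df ` (J1 - {i0})))" using finJ1 by simp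
    have u_ge: "r1 \<le> u" unfolding u_def using Max_ge[OF finU] by simp
    have u_df: "df l \<le> ereal u" if lJ: "l \<in> J1 - {i0}" for l
    proof -
      obtain x where x: "df l = ereal x" using oth[OF lJ] by blast
      have "real_of_ereal (df l) \<le> u" unfolding u_def using Max_ge[OF finU] lJ by simp
      then show ?thesis using x by simp
    qed
    have u_lt: "u < b - 2 * \<epsilon>"
    proof -
      have "u \<in> insert r1 (real_of_ereal ` df ` (J1 - {i0}))" unfolding u_def by (rule Max_in[OF finU]) simp
      then show ?thesis
      proof
        assume "u = r1" then show ?thesis using ab by (simp add: r1_def)
      next
        assume "u \<in> real_of_ereal ` df ` (J1 - {i0})"
        then obtain l where l: "l \<in> J1 - {i0}" "u = real_of_ereal (df l)" by blast
        then show ?thesis using oth[OF l(1)] by auto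
      qed
    qed
    have Lrest: "lincomb c (J1 - {i0}) zf \<in> Bf u" for c
    proof -
      have "lincomb c (J1 - {i0}) zf = (\<Sum>i\<in>J1 - {i0}. sc (c i) (zf i))" by (rule lincomb_sum)
      also have "\<dots> \<in> Bf u"
      proof (rule V.subspace_sum[OF Bf_sub])
        fix l assume l: "l \<in> J1 - {i0}"
        have "zf l \<in> Bf u" using dec_death[OF decf _ u_df[OF l]] l unfolding J1_def Bf_def by blast
        then show "sc (c l) (zf l) \<in> Bf u" by (rule V.subspace_scale[OF Bf_sub])
      qed
      finally show ?thesis .
    qed
    have red: "z - sc (c i0) (zf i0) \<in> Bf u" if "z - lincomb c J1 zf \<in> Bf r1" for z c
    proof -
      have "z - sc (c i0) (zf i0) = (z - lincomb c J1 zf) + lincomb c (J1 - {i0}) zf"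
        using lincomb_split[OF finJ1 i0J1, of c zf] by (simp add: algebra_simps)
      moreover have "z - lincomb c J1 zf \<in> Bf u" using that Bf_mono[OF u_ge] by blast
      ultimately show ?thesis using Lrest V.subspace_add[OF Bf_sub] by metis
    qed
    have e1: "zg k - sc (c1 i0) (zf i0) \<in> Bf u" by (rule red[OF c1])
    have e2: "zg j - sc (c2 i0) (zf i0) \<in> Bf u" by (rule red[OF c2])
    define t where "t = u + \<epsilon>"
    define Jt where "Jt = {i\<in>Ig. ag i \<le> t \<and> ereal t < dg i}"
    have finJt: "finite Jt" using finIg by (simp add: Jt_def)
    have tlt: "t < b - \<epsilon>" using u_lt by (simp add: t_def)
    have tlt': "ereal t < ereal (b - \<epsilon>)" using tlt by simp
    have inJt: "i \<in> Jt" if "i \<in> Ig" "ag i \<le> a + \<epsilon>" "dg i \<ge> ereal (b - \<epsilon>)" for i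
    proof -
      have "ag i \<le> t" using that(2) u_ge eps0 by (simp add: t_def r1_def)
      moreover have "ereal t < dg i" using tlt' that(3) by (rule less_le_trans)
      ultimately show ?thesis using that(1) by (simp add: Jt_def)
    qed
    have kJt: "k \<in> Jt" by (rule inJt[OF k])
    have jJt: "j \<in> Jt" by (rule inJt[OF j(1) jr jd])
    show False
    proof (cases "c1 i0 = 0")
      case True
      then have "sc (c1 i0) (zf i0) = 0" by (simp add: fun_eq_iff)
      then have "zg k \<in> Bf u" using e1 by (metis diff_zero)
      then have "zg k \<in> Bg t" using Bfg[of u] by (auto simp: t_def)
      then have "lincomb (\<lambda>i. if i = k then 1 else 0) Jt zg \<in> Bg t"
        using lincomb_single[OF finJt kJt, of 1 zg] by (simp add: sc_def)
      then have "(\<lambda>i. if i = k then (1::'k) else 0) k = 0"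
        using dec_indep[OF decg, of _ t k] kJt unfolding Jt_def Bg_def by blast
      then show False by simp
    next
      case False
      have "sc (c2 i0) (zg k) + sc (- c1 i0) (zg j) =
            sc (c2 i0) (zg k - sc (c1 i0) (zf i0)) - sc (c1 i0) (zg j - sc (c2 i0) (zf i0))"
        by (simp add: fun_eq_iff sc_def algebra_simps)
      also have "\<dots> \<in> Bf u"
        using e1 e2 V.subspace_diff[OF Bf_sub] V.subspace_scale[OF Bf_sub] by blast
      finally have "sc (c2 i0) (zg k) + sc (- c1 i0) (zg j) \<in> Bg t" using Bfg[of u] by (auto simp: t_def)
      then have "lincomb (\<lambda>i. if i = k then c2 i0 else if i = j then - c1 i0 else 0) Jt zg \<in> Bg t"
        using lincomb_pair[OF finJt kJt jJt kj, of "c2 i0" "- c1 i0" zg] by simp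
      then have "(\<lambda>i. if i = k then c2 i0 else if i = j then - c1 i0 else 0) j = 0"
        using dec_indep[OF decg, of _ t j] jJt unfolding Jt_def Bg_def by blast
      then show False using False kj by simp
    qed
  qed
  have rv: "r < b - \<epsilon>" "b - \<epsilon> \<le> v" using ab eps0 v by (auto simp: r_def abs_le_iff)
  define Jr where "Jr = {i\<in>Ig. ag i \<le> r \<and> ereal r < dg i}"
  have finJr: "finite Jr" using finIg by (simp add: Jr_def)
  have jJr: "j \<in> Jr" using j jr rv v(1) by (simp add: Jr_def r_def)
  have othJr: "\<exists>x. dg i = ereal x \<and> x < b - \<epsilon> \<and> r < x" if iJ: "i \<in> Jr - {j}" for i
  proof -
    have i': "i \<in> Ig" "ag i \<le> a + \<epsilon>" "i \<noteq> j" "ereal r < dg i" using iJ by (auto simp: Jr_def r_def)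
    then have "\<not> dg i \<ge> ereal (b - \<epsilon>)" using U by blast
    then have "dg i < ereal (b - \<epsilon>)" by simp
    then show ?thesis using i'(4) by (cases "dg i") auto
  qed
  obtain c where c: "\<alpha> - lincomb c Jr zg \<in> Bg r"
    using dec_span[OF decg alpha_g] unfolding Jr_def Bg_def by blast
  define q0 where "q0 = Max (insert r (real_of_ereal ` dg ` (Jr - {j})))"
  have finQ: "finite (insert r (real_of_ereal ` dg ` (Jr - {j})))" using finJr by simp
  have q0_ge: "r \<le> q0" unfolding q0_def using Max_ge[OF finQ] by simp
  have q0_dg: "dg i \<le> ereal q0" if iJ: "i \<in> Jr - {j}" for i
  proof -
    obtain x where x: "dg i = ereal x" using othJr[OF iJ] by blast
    have "real_of_ereal (dg i) \<le> q0" unfolding q0_def using Max_ge[OF finQ] iJ by simp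
    then show ?thesis using x by simp
  qed
  have q0_lt: "q0 < b - \<epsilon>"
  proof -
    have "q0 \<in> insert r (real_of_ereal ` dg ` (Jr - {j}))" unfolding q0_def by (rule Max_in[OF finQ]) simp
    then show ?thesis
    proof
      assume "q0 = r" then show ?thesis using rv by simp
    next
      assume "q0 \<in> real_of_ereal ` dg ` (Jr - {j})"
      then obtain i where i: "i \<in> Jr - {j}" "q0 = real_of_ereal (dg i)" by blast
      then show ?thesis using othJr[OF i(1)] by auto
    qed
  qed
  have Lrest: "lincomb c (Jr - {j}) zg \<in> Bg q0"
  proof -
    have "lincomb c (Jr - {j}) zg = (\<Sum>i\<in>Jr - {j}. sc (c i) (zg i))" by (rule lincomb_sum)
    also have "\<dots> \<in> Bg q0"
    proof (rule V.subspace_sum[OF Bg_sub])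
      fix i assume iJ: "i \<in> Jr - {j}"
      have "zg i \<in> Bg q0" using dec_death[OF decg _ q0_dg[OF iJ]] iJ unfolding Jr_def Bg_def by blast
      then show "sc (c i) (zg i) \<in> Bg q0" by (rule V.subspace_scale[OF Bg_sub])
    qed
    finally show ?thesis .
  qed
  have split: "\<alpha> = (\<alpha> - lincomb c Jr zg) + sc (c j) (zg j) + lincomb c (Jr - {j}) zg"
    using lincomb_split[OF finJr jJr, of c zg] by (simp add: algebra_simps)
  have C: "\<alpha> \<in> Bg q \<longleftrightarrow> v \<le> q" if rq: "r \<le> q" for q
  proof
    assume vq: "v \<le> q"
    have "zg j \<in> Bg q" using dec_death[OF decg j(1), of q] j(3) v vq unfolding Bg_def by simp
    then have 1: "sc (c j) (zg j) \<in> Bg q" by (rule V.subspace_scale[OF Bg_sub])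
    have 2: "\<alpha> - lincomb c Jr zg \<in> Bg q" using c Bg_mono[OF rq] by blast
    have 3: "lincomb c (Jr - {j}) zg \<in> Bg q" using Lrest Bg_mono[of q0 q] q0_lt rv vq by auto
    show "\<alpha> \<in> Bg q" using 1 2 3 split V.subspace_add[OF Bg_sub] by metis
  next
    assume aq: "\<alpha> \<in> Bg q"
    show "v \<le> q"
    proof (rule ccontr)
      assume "\<not> v \<le> q"
      then have qv: "q < v" by simp
      have qb: "b - \<epsilon> \<le> q" using GA aq by force
      have 2: "\<alpha> - lincomb c Jr zg \<in> Bg q" using c Bg_mono[OF rq] by blast
      have 3: "lincomb c (Jr - {j}) zg \<in> Bg q" using Lrest Bg_mono[of q0 q] q0_lt qb by auto
      have "sc (c j) (zg j) = \<alpha> - (\<alpha> - lincomb c Jr zg) - lincomb c (Jr - {j}) zg"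
        using split by (simp add: algebra_simps)
      also have "\<dots> \<in> Bg q" using aq 2 3 V.subspace_diff[OF Bg_sub] by metis
      finally have scj: "sc (c j) (zg j) \<in> Bg q" .
      define Jq where "Jq = {i\<in>Ig. ag i \<le> q \<and> ereal q < dg i}"
      have finJq: "finite Jq" using finIg by (simp add: Jq_def)
      have jJq: "j \<in> Jq" using j jr rq qv v by (simp add: Jq_def r_def)
      have "lincomb (\<lambda>i. if i = j then c j else 0) Jq zg \<in> Bg q"
        using lincomb_single[OF finJq jJq, of "c j" zg] scj by simp
      then have "(\<lambda>i. if i = j then c j else 0) j = 0"
        using dec_indep[OF decg, of _ q j] jJq unfolding Jq_def Bg_def by blast
      then have cj: "c j = 0" by simp
      then have "sc (c j) (zg j) = 0" by (simp add: fun_eq_iff)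
      then have "\<alpha> = (\<alpha> - lincomb c Jr zg) + lincomb c (Jr - {j}) zg" using split by (metis add_0_right)
      moreover have "\<alpha> - lincomb c Jr zg \<in> Bg q0" using c Bg_mono[OF q0_ge] by blast
      ultimately have "\<alpha> \<in> Bg q0" using Lrest V.subspace_add[OF Bg_sub] by metis
      then show False using GA q0_lt by blast
    qed
  qed
  have part1: "\<exists>r. \<alpha> \<in> cycles K (sublevel K g r) n \<and> \<alpha> \<notin> boundaries K (sublevel K g r) n
              \<and> termination_scale K g n r \<alpha> = b'"
  proof (intro exI conjI)
    show "\<alpha> \<in> cycles K (sublevel K g r) n" by (rule alpha_g)
    show "\<alpha> \<notin> boundaries K (sublevel K g r) n" using GA[OF rv(1)] by (simp add: Bg_def)
    have rv': "r \<le> v" using rv by simp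
    have "{ereal q | q. r \<le> q \<and> \<alpha> \<in> boundaries K (sublevel K g q) n} = {ereal q | q. v \<le> q}"
      using C rv' unfolding Bg_def by (auto intro: order_trans)
    moreover have "Inf {ereal q | q. v \<le> q} = ereal v"
    proof (rule antisym)
      show "Inf {ereal q | q. v \<le> q} \<le> ereal v" by (rule Inf_lower) auto
      show "ereal v \<le> Inf {ereal q | q. v \<le> q}" by (rule Inf_greatest) auto
    qed
    ultimately show "termination_scale K g n r \<alpha> = b'" unfolding termination_scale_def using v by simp
  qed
  define Ru where "Ru = Inf {ereal \<bar>f \<tau> - b\<bar> | \<tau>. birth_simplex TYPE('k) K f \<tau> \<and> card \<tau> = n + 2 \<and> f \<tau> > b}"
  define Rl where "Rl = Inf {ereal \<bar>f \<tau> - b\<bar> | \<tau>. terminal_simplex TYPE('k) K f \<tau> \<and> card \<tau> = n + 2 \<and> f \<tau> < b}"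
  have part2: "\<exists>\<sigma>\<in>K. f \<sigma> = b \<and> ereal (g \<sigma>) = b'" if R: "ereal (2 * \<epsilon>) \<le> min Ru Rl"
  proof -
    have Ru2: "2 * \<epsilon> \<le> f \<tau> - b" if "birth_simplex TYPE('k) K f \<tau>" "card \<tau> = n + 2" "f \<tau> > b" for \<tau>
    proof -
      have "Ru \<le> ereal \<bar>f \<tau> - b\<bar>" unfolding Ru_def by (rule Inf_lower) (use that in blast)
      then have "ereal (2 * \<epsilon>) \<le> ereal \<bar>f \<tau> - b\<bar>" using R by (meson min.boundedE order_trans)
      then show ?thesis using that(3) by simp
    qed
    have Rl2: "2 * \<epsilon> \<le> b - f \<tau>" if "terminal_simplex TYPE('k) K f \<tau>" "card \<tau> = n + 2" "f \<tau> < b" for \<tau>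
    proof -
      have "Rl \<le> ereal \<bar>f \<tau> - b\<bar>" unfolding Rl_def by (rule Inf_lower) (use that in blast)
      then have "ereal (2 * \<epsilon>) \<le> ereal \<bar>f \<tau> - b\<bar>" using R by (meson min.boundedE order_trans)
      then show ?thesis using that(3) by simp
    qed
    obtain \<sigma> where \<sigma>: "\<sigma> \<in> K" "f \<sigma> = b" using TC by blast
    have g\<sigma>: "b - \<epsilon> \<le> g \<sigma>" "g \<sigma> \<le> b + \<epsilon>" using fg \<sigma> unfolding sup_norm_le_def by (auto simp: abs_le_iff)
    obtain c0 where c0: "\<alpha> = bd K c0" "chain (sublevel K f b) (Suc n) c0"
      using TB unfolding Bf_def boundaries_def by blast
    have finj: "\<And>x y. x \<in> K \<Longrightarrow> y \<in> K \<Longrightarrow> f x = f y \<Longrightarrow> x = y"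
      using f_inj by (meson inj_onD)
    have ffilt: "\<And>x y. x \<in> K \<Longrightarrow> y \<in> K \<Longrightarrow> x \<subseteq> y \<Longrightarrow> f x \<le> f y"
      using f_filt unfolding filtration_def by blast
    have noB: "\<alpha> \<notin> Bg q" if q\<sigma>: "q < g \<sigma>" for q
    proof
      assume "\<alpha> \<in> Bg q"
      then obtain c where cc: "\<alpha> = bd K c" "chain (sublevel K g q) (Suc n) c"
        unfolding Bg_def boundaries_def by blast
      define S where "S = {\<tau>. c \<tau> \<noteq> 0}"
      have S: "\<And>\<tau>. \<tau> \<in> S \<Longrightarrow> \<tau> \<in> K \<and> g \<tau> \<le> q \<and> card \<tau> = Suc (Suc n)"
        using cc(2) by (auto simp: S_def chain_def sublevel_def)
      have finS: "finite S" using S finK by (meson finite_subset subsetI)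
      show False
      proof (cases "\<forall>\<tau>\<in>S. f \<tau> < b")
        case True
        define q' where "q' = Max (insert a (f ` S))"
        have finS': "finite (insert a (f ` S))" using finS by simp
        have "q' \<in> insert a (f ` S)" unfolding q'_def by (rule Max_in[OF finS']) simp
        then have q'b: "q' < b" using True ab eps0 by auto
        have "chain (sublevel K f q') (Suc n) c"
          unfolding chain_def sublevel_def
        proof (intro allI impI)
          fix \<tau> assume "c \<tau> \<noteq> 0"
          then have "\<tau> \<in> S" by (simp add: S_def)
          then show "\<tau> \<in> {\<sigma> \<in> K. f \<sigma> \<le> q'} \<and> card \<tau> = Suc (Suc n)"
            using S Max_ge[OF finS'] by (auto simp: q'_def)
        qed
        then have "\<alpha> \<in> Bf q'" using cc(1) unfolding Bf_def boundaries_def by blast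
        then show False using TA q'b by blast
      next
        case False
        then obtain \<tau>1 where \<tau>1: "\<tau>1 \<in> S" "f \<tau>1 \<ge> b" by force
        have neS: "f ` S \<noteq> {}" using \<tau>1 by blast
        obtain m where m: "m \<in> S" "f m = Max (f ` S)" using Max_in[OF _ neS] finS by force
        have mmax: "\<And>\<tau>. \<tau> \<in> S \<Longrightarrow> f \<tau> \<le> f m" using m(2) Max_ge finS by simp
        have mK: "m \<in> K" "g m \<le> q" "card m = Suc (Suc n)" using S[OF m(1)] by auto
        have "m \<noteq> \<sigma>" using mK(2) q\<sigma> by auto
        then have "f m \<noteq> b" using finj[OF mK(1) \<sigma>(1)] \<sigma>(2) by auto
        moreover have "f m \<ge> b" using mmax[OF \<tau>1(1)] \<tau>1(2) by simp
        ultimately have fmb: "f m > b" by simp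
        have cm: "c m \<noteq> 0" using m(1) by (simp add: S_def)
        have birth: "birth_simplex TYPE('k) K f m"
          unfolding birth_simplex_def
        proof (intro conjI bexI ballI)
          show "m \<in> K" by (rule mK(1))
          have cm1: "card m - 1 = Suc n" using mK(3) by simp
          show "c - c0 \<in> cycles K (sublevel K f (f m)) (card m - 1)"
            unfolding cm1 cycles_def
          proof (intro CollectI conjI)
            show "chain (sublevel K f (f m)) (Suc n) (c - c0)"
              unfolding chain_def
            proof (intro allI impI)
              fix \<tau> assume "(c - c0) \<tau> \<noteq> 0"
              then have "c \<tau> \<noteq> 0 \<or> c0 \<tau> \<noteq> 0" by auto
              then show "\<tau> \<in> sublevel K f (f m) \<and> card \<tau> = Suc (Suc n)"
              proof
                assume "c \<tau> \<noteq> 0"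
                then have "\<tau> \<in> S" by (simp add: S_def)
                then show ?thesis using S mmax by (auto simp: sublevel_def)
              next
                assume "c0 \<tau> \<noteq> 0"
                then show ?thesis using c0(2) fmb by (auto simp: chain_def sublevel_def)
              qed
            qed
            show "bd K (c - c0) = 0" using cc(1) c0(1) by (simp add: bd_diff)
          qed
        next
          fix w :: "'v set \<Rightarrow> 'k"
          assume w: "w \<in> cycles K (strict_sublevel K f (f m)) (card m - 1)"
          show "c - c0 - w \<notin> boundaries K (sublevel K f (f m)) (card m - 1)"
          proof
            assume "c - c0 - w \<in> boundaries K (sublevel K f (f m)) (card m - 1)"
            then obtain e where e: "c - c0 - w = bd K e" "chain (sublevel K f (f m)) (Suc (card m - 1)) e"
              unfolding boundaries_def by blast
            have "bd K e m = 0"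
            proof -
              have mne: "m \<noteq> {}" using mK(3) by auto
              have "\<forall>\<rho>\<in>{\<rho>\<in>K. m \<subseteq> \<rho> \<and> card \<rho> = Suc (card m)}. e \<rho> = 0"
              proof
                fix \<rho> assume \<rho>: "\<rho> \<in> {\<rho>\<in>K. m \<subseteq> \<rho> \<and> card \<rho> = Suc (card m)}"
                show "e \<rho> = 0"
                proof (rule ccontr)
                  assume "e \<rho> \<noteq> 0"
                  then have "f \<rho> \<le> f m" using e(2) by (auto simp: chain_def sublevel_def)
                  moreover have "f m \<le> f \<rho>" using ffilt[OF mK(1)] \<rho> by blast
                  ultimately have "\<rho> = m" using finj[OF _ mK(1)] \<rho> by force
                  then show False using \<rho> by simp
                qed
              qed
              then show ?thesis unfolding bd_def using mne by simp
            qed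
            moreover have "c0 m = 0" using c0(2) fmb by (auto simp: chain_def sublevel_def)
            moreover have "w m = 0" using w by (auto simp: cycles_def chain_def strict_sublevel_def)
            ultimately have "c m = 0" using e(1) by (metis diff_zero minus_apply)
            then show False using cm by simp
          qed
        qed
        have "2 * \<epsilon> \<le> f m - b" using Ru2[OF birth] mK(3) fmb by simp
        moreover have "g m \<ge> f m - \<epsilon>" using fg mK(1) unfolding sup_norm_le_def by (auto simp: abs_le_iff)
        ultimately show False using mK(2) q\<sigma> g\<sigma> by linarith
      qed
    qed
    have KL: "\<forall>\<rho>. card {x\<in>K. f x < f \<rho>} = N \<longrightarrow> \<rho> \<in> K \<longrightarrow> card \<rho> = Suc (Suc n) \<longrightarrow> f \<rho> \<le> b
               \<longrightarrow> bd K (ind \<rho> :: 'v set \<Rightarrow> 'k) \<in> Bg (g \<sigma>)" for N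
    proof (induction N rule: less_induct)
      case (less N)
      show ?case
      proof (intro allI impI)
        fix \<rho> assume N: "card {x\<in>K. f x < f \<rho>} = N" and \<rho>K: "\<rho> \<in> K"
          and c\<rho>: "card \<rho> = Suc (Suc n)" and f\<rho>: "f \<rho> \<le> b"
        have ind_chain: "chain {\<rho>} (Suc n) (ind \<rho> :: 'v set \<Rightarrow> 'k)"
          using c\<rho> by (auto simp: chain_def ind_def)
        show "bd K (ind \<rho> :: 'v set \<Rightarrow> 'k) \<in> Bg (g \<sigma>)"
        proof (cases "g \<rho> \<le> g \<sigma>")
          case True
          then have "chain (sublevel K g (g \<sigma>)) (Suc n) (ind \<rho> :: 'v set \<Rightarrow> 'k)"
            using ind_chain \<rho>K by (auto simp: chain_def sublevel_def)
          then show ?thesis unfolding Bg_def boundaries_def by blast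
        next
          case False
          have "f \<rho> \<ge> g \<rho> - \<epsilon>" using fg \<rho>K unfolding sup_norm_le_def by (auto simp: abs_le_iff)
          then have f\<rho>2: "f \<rho> > b - 2 * \<epsilon>" using False g\<sigma> by linarith
          have "\<rho> \<noteq> \<sigma>" using False by auto
          then have "f \<rho> \<noteq> b" using finj[OF \<rho>K \<sigma>(1)] \<sigma>(2) by auto
          then have f\<rho>b: "f \<rho> < b" using f\<rho> by simp
          have nterm: "\<not> terminal_simplex TYPE('k) K f \<rho>"
          proof
            assume "terminal_simplex TYPE('k) K f \<rho>"
            then have "2 * \<epsilon> \<le> b - f \<rho>" using Rl2 c\<rho> f\<rho>b by simp
            then show False using f\<rho>2 by simp
          qed
          define d\<rho> where "d\<rho> = bd K (ind \<rho> :: 'v set \<Rightarrow> 'k)"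
          have cyc: "d\<rho> \<in> cycles K (strict_sublevel K f (f \<rho>)) n"
            unfolding cycles_def
          proof (intro CollectI conjI)
            show "bd K d\<rho> = 0" unfolding d\<rho>_def by (rule bd_bd[OF K])
            show "chain (strict_sublevel K f (f \<rho>)) n d\<rho>"
              unfolding chain_def
            proof (intro allI impI)
              fix \<tau> assume nz: "d\<rho> \<tau> \<noteq> 0"
              then have \<tau>ne: "\<tau> \<noteq> {}" by (auto simp: d\<rho>_def bd_def)
              then have "(\<Sum>\<sigma>'\<in>{\<sigma>'\<in>K. \<tau> \<subseteq> \<sigma>' \<and> card \<sigma>' = Suc (card \<tau>)}. face_sign \<sigma>' \<tau> * (ind \<rho> :: 'v set \<Rightarrow> 'k) \<sigma>') \<noteq> 0"
                using nz by (simp add: d\<rho>_def bd_def)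
              then obtain \<sigma>' where \<sigma>': "\<sigma>' \<in> {\<sigma>'\<in>K. \<tau> \<subseteq> \<sigma>' \<and> card \<sigma>' = Suc (card \<tau>)}"
                "face_sign \<sigma>' \<tau> * (ind \<rho> :: 'v set \<Rightarrow> 'k) \<sigma>' \<noteq> 0"
                by (meson sum.not_neutral_contains_not_neutral)
              then have "\<sigma>' = \<rho>" by (auto simp: ind_def split: if_splits)
              then have \<tau>\<rho>: "\<tau> \<subseteq> \<rho>" "card \<rho> = Suc (card \<tau>)" using \<sigma>' by auto
              have \<tau>K: "\<tau> \<in> K" by (rule sc_closed[OF K \<rho>K \<tau>\<rho>(1) \<tau>ne])
              have "f \<tau> \<le> f \<rho>" by (rule ffilt[OF \<tau>K \<rho>K \<tau>\<rho>(1)])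
              moreover have "\<tau> \<noteq> \<rho>" using \<tau>\<rho>(2) by auto
              then have "f \<tau> \<noteq> f \<rho>" using finj[OF \<tau>K \<rho>K] by blast
              ultimately have "f \<tau> < f \<rho>" by simp
              then show "\<tau> \<in> strict_sublevel K f (f \<rho>) \<and> card \<tau> = Suc n"
                using \<tau>K \<tau>\<rho>(2) c\<rho> by (simp add: strict_sublevel_def)
            qed
          qed
          have bsub: "d\<rho> \<in> boundaries K (sublevel K f (f \<rho>)) n"
          proof -
            have "chain (sublevel K f (f \<rho>)) (Suc n) (ind \<rho> :: 'v set \<Rightarrow> 'k)"
              using ind_chain \<rho>K by (auto simp: chain_def sublevel_def)
            then show ?thesis unfolding boundaries_def d\<rho>_def by blast
          qed
          have c\<rho>2: "card \<rho> - 2 = n" using c\<rho> by simp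
          have "d\<rho> \<in> boundaries K (strict_sublevel K f (f \<rho>)) n"
            using nterm cyc bsub \<rho>K c\<rho> unfolding terminal_simplex_def c\<rho>2 by auto
          then obtain e where e: "d\<rho> = bd K e" "chain (strict_sublevel K f (f \<rho>)) (Suc n) e"
            unfolding boundaries_def by blast
          have "bd K e \<in> Bg (g \<sigma>)"
          proof (rule bd_chain_in[OF finK _ e(2) Bg_sub])
            show "strict_sublevel K f (f \<rho>) \<subseteq> K" by (auto simp: strict_sublevel_def)
          next
            fix \<tau> assume "e \<tau> \<noteq> 0"
            then have \<tau>: "\<tau> \<in> K" "f \<tau> < f \<rho>" "card \<tau> = Suc (Suc n)"
              using e(2) by (auto simp: chain_def strict_sublevel_def)
            have ps: "{x\<in>K. f x < f \<tau>} \<subset> {x\<in>K. f x < f \<rho>}" using \<tau> by auto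
            have fin2: "finite {x\<in>K. f x < f \<rho>}" using finK by simp
            have "card {x\<in>K. f x < f \<tau>} < N" using psubset_card_mono[OF fin2 ps] N by simp
            then show "bd K (ind \<tau>) \<in> Bg (g \<sigma>)" using less.IH \<tau> f\<rho> by auto
          qed
          then show ?thesis using e(1) by (simp add: d\<rho>_def)
        qed
      qed
    qed
    have inB: "\<alpha> \<in> Bg (g \<sigma>)"
      unfolding c0(1)
    proof (rule bd_chain_in[OF finK _ c0(2) Bg_sub])
      show "sublevel K f b \<subseteq> K" by (auto simp: sublevel_def)
    next
      fix \<tau> assume "c0 \<tau> \<noteq> 0"
      then have "\<tau> \<in> K" "f \<tau> \<le> b" "card \<tau> = Suc (Suc n)"
        using c0(2) by (auto simp: chain_def sublevel_def)
      then show "bd K (ind \<tau>) \<in> Bg (g \<sigma>)" using KL by blast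
    qed
    have rg: "r \<le> g \<sigma>" using rv g\<sigma> by simp
    have vg: "v \<le> g \<sigma>" using C[OF rg] inB by blast
    have "\<not> v < g \<sigma>"
    proof
      assume "v < g \<sigma>"
      moreover have "\<alpha> \<in> Bg v" using C[of v] rv by simp
      ultimately show False using noB by blast
    qed
    then have "g \<sigma> = v" using vg by simp
    then show ?thesis using \<sigma> v by auto
  qed
  show ?thesis using part1 part2 unfolding Ru_def Rl_def Let_def by blast
qed

end
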